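(* Let $c>1$ be a non-integral real number, let $L=\lfloor c\rfloor+1$ and let $m$ be a positive integer. For any $L$-tuple $h=(h_0,h_1,\ldots,h_{L-1})$ of integers which are not all $0$ and any positive integer $N$, we have \[\sum_{n=N}^{2N-1}e\Bigl(\frac1m\sum_{\ell=0}^{L-1}h_\ell (n+\ell)^c\Bigr)\ll_{L,c,m}\|h\|_\infty\,N^{1-\frac{\|c\|}{2^{(c+1)}}},\] as soon as $\|h\|_\infty=o\bigl(N^{1-\{c\}}\bigr)$ (that is: for $N$ and $h$ ranging so that $\|h\|_\infty/N^{1-\{c\}}\to 0$, the bound holds with an implied constant depending only on $L,c,m$).
   Context: $e(u)=\exp(2\pi i u)$. For $h\in\mathbb R^L$, $\|h\|_\infty=\max_i|h_i|$. For real $x$, $\{x\}=x-\lfloor x\rfloor$ is the fractional part and $\|x\|=\min\{\{x\},1-\{x\}\}$ is the distance from $x$ to the nearest integer. The exponent $2^{(c+1)}$ is the real power $2^{c+1}$. *)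

theory Defs
  imports "HOL-Analysis.Analysis"
begin

definition e :: "real \<Rightarrow> complex" where
  "e u = exp (2 * of_real pi * \<i> * of_real u)"

definition dist_int :: "real \<Rightarrow> real" where
  "dist_int x = min (frac x) (1 - frac x)"

definition sup_norm :: "nat \<Rightarrow> (nat \<Rightarrow> int) \<Rightarrow> real" where
  "sup_norm L h = (if L = 0 then 0 else real_of_int (Max ((\<lambda>l. \<bar>h l\<bar>) ` {..<L})))"

end

theory Submission
  imports Defs "HOL-Computational_Algebra.Polynomial"
begin

lemma e_cis: "e x = cis (2 * pi * x)"
  by (simp add: e_def cis_conv_exp mult_ac)

lemma e_add: "e (x + y) = e x * e y"
  by (simp add: e_cis cis_mult algebra_simps)

lemma norm_e [simp]: "norm (e x) = 1"
  by (simp add: e_cis)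

lemma cnj_e: "cnj (e x) = e (- x)"
  by (simp add: e_cis cis_cnj)

lemma e_diff: "e (x - y) = e x * cnj (e y)"
  using e_add[of x "-y"] by (simp add: cnj_e)

lemma w_alg:
  fixes s c :: real
  assumes "s \<noteq> 0" "s^2 + c^2 = 1"
  shows "(Complex (1 - 2 * s^2) (2 * s * c) - 1) * (- (1/2) - \<i> / 2 * of_real (c / s)) = 1"
proof -
  have "c^2 = 1 - s^2" using assms by simp
  have k: "c * (c * (s * 2)) + s * (s * (s * 2)) = s * 2 * (c * c + s * s)" by (simp add: algebra_simps)
  have k2: "c * c + s * s = 1" using assms by (simp add: power2_eq_square)
  show ?thesis using assms k k2
    by (simp add: complex_eq_iff field_simps power2_eq_square)
qed

lemma e_w_identity:
  fixes d :: real
  assumes "sin (pi * d) \<noteq> 0"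
  shows "(e d - 1) * (- (1/2) - \<i> / 2 * of_real (cot (pi * d))) = 1"
proof -
  let ?s = "sin (pi * d)" and ?c = "cos (pi * d)"
  have c2: "cos (2 * pi * d) = 1 - 2 * ?s^2" using cos_double_sin[of "pi*d"] by (simp add: mult_ac)
  have s2: "sin (2 * pi * d) = 2 * ?s * ?c" using sin_double[of "pi*d"] by (simp add: mult_ac)
  have ed: "e d = Complex (1 - 2 * ?s^2) (2 * ?s * ?c)"
    by (simp add: e_cis complex_eq_iff c2 s2)
  show ?thesis unfolding ed cot_def
    by (rule w_alg) (use assms in auto)
qed

lemma cot_antimono:
  assumes "0 < x" "x \<le> y" "y < pi"
  shows "cot y \<le> cot (x::real)"
proof -
  have sx: "sin x > 0" using assms by (intro sin_gt_zero) auto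
  have sy: "sin y > 0" using assms by (intro sin_gt_zero) auto
  have "cot x - cot y = sin (y - x) / (sin x * sin y)"
    using sx sy by (simp add: cot_def sin_diff field_simps)
  moreover have "sin (y - x) \<ge> 0" using assms by (intro sin_ge_zero) auto
  ultimately have "cot x - cot y \<ge> 0" using sx sy by simp
  then show ?thesis by simp
qed

lemma abs_cot_bound:
  fixes d lam :: real
  assumes "0 < lam" "lam \<le> d" "d \<le> 1 - lam"
  shows "\<bar>cot (pi * d)\<bar> \<le> 1 / (pi * lam)"
proof (cases "d = 1/2")
  case True
  then have "pi * d = pi / 2" by simp
  then have "cos (pi * d) = 0" by (metis cos_pi_half)
  then have "cot (pi * d) = 0" by (simp add: cot_def)
  then show ?thesis using assms by simp
next
  case False
  have cot_tan: "cot t = inverse (tan t)" for t :: real by (rule cot_altdef)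
  show ?thesis
  proof (cases "d < 1/2")
    case True
    have "\<bar>pi * d\<bar> \<le> \<bar>tan (pi * d)\<bar>" using True assms by (intro abs_tan_ge) auto
    moreover have "pi * lam \<le> pi * d" using assms by simp
    moreover have "pi * lam > 0" using assms by simp
    ultimately have "pi * lam \<le> \<bar>tan (pi * d)\<bar>" using assms by (smt (verit))
    then show ?thesis using \<open>pi * lam > 0\<close>
      by (simp add: cot_tan abs_inverse divide_simps)
  next
    case f2: False
    have t: "tan (pi * d) = tan (pi * (d - 1))"
      using tan_periodic_pi[of "pi * (d-1)"] by (simp add: algebra_simps)
    have ab: "\<bar>pi * (d - 1)\<bar> = pi * (1 - d)" using assms by (simp add: abs_if algebra_simps)
    have "pi * (1 - d) < pi / 2" using f2 False by simp
    then have "\<bar>pi * (d - 1)\<bar> \<le> \<bar>tan (pi * (d - 1))\<bar>" using ab by (intro abs_tan_ge) auto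
    moreover have "pi * lam \<le> \<bar>pi * (d - 1)\<bar>" using assms ab by simp
    moreover have "pi * lam > 0" using assms by simp
    ultimately have "pi * lam \<le> \<bar>tan (pi * d)\<bar>" using t by simp
    then show ?thesis using \<open>pi * lam > 0\<close>
      by (simp add: cot_tan abs_inverse divide_simps)
  qed
qed

lemma sum_by_parts_aux:
  fixes u w :: "nat \<Rightarrow> complex"
  shows "(\<Sum>n<Suc j. (u (n+1) - u n) * w n) =
         u (Suc j) * w j - u 0 * w 0 - (\<Sum>n<j. u (n+1) * (w (n+1) - w n))"
  by (induction j) (auto simp: algebra_simps)

lemma telescope_abs_mono:
  fixes f :: "nat \<Rightarrow> real"
  assumes "(\<forall>n. n < j \<longrightarrow> f n \<le> f (n+1)) \<or> (\<forall>n. n < j \<longrightarrow> f (n+1) \<le> f n)"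
  shows "(\<Sum>n<j. \<bar>f (n+1) - f n\<bar>) = \<bar>f j - f 0\<bar>"
  using assms
proof
  assume h: "\<forall>n. n < j \<longrightarrow> f n \<le> f (n+1)"
  have "(\<Sum>n<j. \<bar>f (n+1) - f n\<bar>) = (\<Sum>n<j. f (n+1) - f n)"
    using h by (intro sum.cong) auto
  also have "\<dots> = f j - f 0" using sum_lessThan_telescope[of f j] by simp
  finally have eq: "(\<Sum>n<j. \<bar>f (n+1) - f n\<bar>) = f j - f 0" .
  have "0 \<le> (\<Sum>n<j. \<bar>f (n+1) - f n\<bar>)" by (rule sum_nonneg) simp
  then have "0 \<le> f j - f 0" using eq by linarith
  then show ?thesis using eq by simp
next
  assume h: "\<forall>n. n < j \<longrightarrow> f (n+1) \<le> f n"
  have "(\<Sum>n<j. \<bar>f (n+1) - f n\<bar>) = (\<Sum>n<j. f n - f (n+1))"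
    using h by (intro sum.cong) auto
  also have "\<dots> = f 0 - f j" using sum_lessThan_telescope'[of f j] by simp
  finally have eq: "(\<Sum>n<j. \<bar>f (n+1) - f n\<bar>) = f 0 - f j" .
  have "0 \<le> (\<Sum>n<j. \<bar>f (n+1) - f n\<bar>)" by (rule sum_nonneg) simp
  then have "0 \<le> f 0 - f j" using eq by linarith
  then show ?thesis using eq by simp
qed

lemma kusmin_landau_pos:
  fixes \<phi> :: "nat \<Rightarrow> real" and lam :: real
  assumes lam: "0 < lam" "lam \<le> 1/2"
    and dn: "\<forall>n. n + 1 < M \<longrightarrow> lam \<le> \<phi> (n+1) - \<phi> n \<and> \<phi> (n+1) - \<phi> n \<le> 1 - lam"
    and mono: "(\<forall>n. n + 2 < M \<longrightarrow> \<phi> (n+1) - \<phi> n \<le> \<phi> (n+2) - \<phi> (n+1)) \<or>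
               (\<forall>n. n + 2 < M \<longrightarrow> \<phi> (n+2) - \<phi> (n+1) \<le> \<phi> (n+1) - \<phi> n)"
  shows "norm (\<Sum>n<M. e (\<phi> n)) \<le> 2 / lam"
proof (cases "M \<le> 1")
  case True
  have "norm (\<Sum>n<M. e (\<phi> n)) \<le> (\<Sum>n<M. norm (e (\<phi> n)))" by (rule norm_sum)
  also have "\<dots> = real M" by simp
  also have "\<dots> \<le> 1" using True by simp
  also have "1 \<le> 2 / lam" using lam by (simp add: field_simps)
  finally show ?thesis .
next
  case False
  define j where "j = M - 2"
  have M: "M = Suc (Suc j)" using False unfolding j_def by simp
  define d where "d n = \<phi> (n+1) - \<phi> n" for n
  define \<kappa> where "\<kappa> n = cot (pi * d n)" for n
  define w where "w n = - (1/2) - \<i> / 2 * of_real (\<kappa> n)" for n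
  define u where "u n = e (\<phi> n)" for n
  define B where "B = 1 / (pi * lam)"
  have dn': "lam \<le> d n \<and> d n \<le> 1 - lam" if "n \<le> j" for n
    using dn that M by (auto simp: d_def)
  have kB: "\<bar>\<kappa> n\<bar> \<le> B" if "n \<le> j" for n
    using dn'[OF that] lam unfolding \<kappa>_def B_def by (intro abs_cot_bound) auto
  have wB: "norm (w n) \<le> 1/2 + B/2" if "n \<le> j" for n
  proof -
    have "norm (w n) \<le> norm (- (1/2) :: complex) + norm (\<i> / 2 * of_real (\<kappa> n))"
      unfolding w_def by (rule norm_triangle_ineq4)
    also have "\<dots> = 1/2 + \<bar>\<kappa> n\<bar> / 2" by (simp add: norm_mult norm_divide)
    finally show ?thesis using kB[OF that] by simp
  qed
  have uw: "u n = (u (n+1) - u n) * w n" if "n \<le> j" for n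
  proof -
    have "sin (pi * d n) \<noteq> 0"
    proof -
      have "0 < pi * d n" "pi * d n < pi" using dn'[OF that] lam by auto
      then have "sin (pi * d n) > 0" by (rule sin_gt_zero)
      then show ?thesis by simp
    qed
    then have "(e (d n) - 1) * w n = 1" unfolding w_def \<kappa>_def by (rule e_w_identity)
    moreover have "u (n+1) = u n * e (d n)" unfolding u_def d_def using e_add[of "\<phi> n" "\<phi> (n+1) - \<phi> n"] by simp
    ultimately have "(u (n+1) - u n) * w n = u n * ((e (d n) - 1) * w n)" by (simp add: algebra_simps)
    then show ?thesis using \<open>(e (d n) - 1) * w n = 1\<close> by simp
  qed
  have kmono: "(\<forall>n. n < j \<longrightarrow> \<kappa> n \<le> \<kappa> (n+1)) \<or> (\<forall>n. n < j \<longrightarrow> \<kappa> (n+1) \<le> \<kappa> n)"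
    using mono
  proof
    assume h: "\<forall>n. n + 2 < M \<longrightarrow> \<phi> (n+1) - \<phi> n \<le> \<phi> (n+2) - \<phi> (n+1)"
    have "\<kappa> (n+1) \<le> \<kappa> n" if "n < j" for n
      unfolding \<kappa>_def using h[rule_format, of n] dn'[of n] dn'[of "n+1"] that lam M
      by (intro cot_antimono) (auto simp: d_def)
    then show ?thesis by blast
  next
    assume h: "\<forall>n. n + 2 < M \<longrightarrow> \<phi> (n+2) - \<phi> (n+1) \<le> \<phi> (n+1) - \<phi> n"
    have "\<kappa> n \<le> \<kappa> (n+1)" if "n < j" for n
      unfolding \<kappa>_def using h[rule_format, of n] dn'[of n] dn'[of "n+1"] that lam M
      by (intro cot_antimono) (auto simp: d_def)
    then show ?thesis by blast
  qed
  have "(\<Sum>n<M. u n) = (\<Sum>n<Suc j. u n) + u (Suc j)" using M by simp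
  also have "(\<Sum>n<Suc j. u n) = (\<Sum>n<Suc j. (u (n+1) - u n) * w n)"
    using uw by (intro sum.cong) auto
  also have "\<dots> = u (Suc j) * w j - u 0 * w 0 - (\<Sum>n<j. u (n+1) * (w (n+1) - w n))"
    by (rule sum_by_parts_aux)
  finally have S: "(\<Sum>n<M. u n) = u (Suc j) * w j - u 0 * w 0 - (\<Sum>n<j. u (n+1) * (w (n+1) - w n)) + u (Suc j)" .
  have nw: "norm (u (n+1) * (w (n+1) - w n)) = \<bar>\<kappa> (n+1) - \<kappa> n\<bar> / 2" for n
  proof -
    have "w (n+1) - w n = - (\<i> / 2) * of_real (\<kappa> (n+1) - \<kappa> n)" unfolding w_def by (simp add: algebra_simps)
    then show ?thesis by (simp add: u_def norm_mult norm_divide flip: of_real_diff)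
  qed
  have "norm (\<Sum>n<j. u (n+1) * (w (n+1) - w n)) \<le> (\<Sum>n<j. norm (u (n+1) * (w (n+1) - w n)))"
    by (rule norm_sum)
  also have "\<dots> = (\<Sum>n<j. \<bar>\<kappa> (n+1) - \<kappa> n\<bar> / 2)" by (rule sum.cong[OF refl], rule nw)
  also have "\<dots> = (\<Sum>n<j. \<bar>\<kappa> (n+1) - \<kappa> n\<bar>) / 2" by (simp add: sum_divide_distrib)
  also have "\<dots> = \<bar>\<kappa> j - \<kappa> 0\<bar> / 2" using telescope_abs_mono[OF kmono] by simp
  also have "\<dots> \<le> B" using kB[of j] kB[of 0] by simp
  finally have T: "norm (\<Sum>n<j. u (n+1) * (w (n+1) - w n)) \<le> B" .
  have "norm (\<Sum>n<M. u n) \<le> norm (u (Suc j) * w j) + norm (u 0 * w 0) + norm (\<Sum>n<j. u (n+1) * (w (n+1) - w n)) + norm (u (Suc j))"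
    unfolding S by (intro order.trans[OF norm_triangle_ineq] add_right_mono order.trans[OF norm_triangle_ineq4] add_mono order.refl)
  also have "\<dots> \<le> (1/2 + B/2) + (1/2 + B/2) + B + 1"
    using wB[of j] wB[of 0] T by (simp add: u_def norm_mult)
  also have "\<dots> = 2 + 2 * B" by simp
  also have "\<dots> \<le> 2 / lam"
  proof -
    have "2 * B \<le> 1 / lam" unfolding B_def using lam pi_gt3 by (simp add: field_simps)
    moreover have "2 \<le> 1 / lam" using lam by (simp add: field_simps)
    ultimately show ?thesis by simp
  qed
  finally show ?thesis by (simp add: u_def)
qed

lemma sum_shift_int:
  fixes f :: "int \<Rightarrow> 'a::comm_monoid_add"
  shows "(\<Sum>t\<in>{p..<q}. f (t + k)) = (\<Sum>n\<in>{p+k..<q+k}. f n)"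
proof -
  have "(\<Sum>n\<in>{p+k..<q+k}. f n) = sum f ((\<lambda>t. t + k) ` {p..<q})" by simp
  also have "\<dots> = (\<Sum>t\<in>{p..<q}. f (t + k))" by (subst sum.reindex) (auto simp: inj_on_def)
  finally show ?thesis by simp
qed

lemma sum_window:
  fixes z :: "int \<Rightarrow> 'a::comm_monoid_add"
  assumes "\<forall>n. n \<notin> {a..<b} \<longrightarrow> z n = 0" "p \<le> a" "b \<le> q"
  shows "(\<Sum>n\<in>{p..<q}. z n) = (\<Sum>n\<in>{a..<b}. z n)"
  using assms by (intro sum.mono_neutral_right) auto

lemma sum_sym_int:
  fixes g :: "int \<Rightarrow> real"
  assumes "\<And>d. g (- d) = g d" "H \<ge> 1"
  shows "(\<Sum>d\<in>{1-H..<H}. g d) = g 0 + 2 * (\<Sum>d\<in>{1..<H}. g d)"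
proof -
  have split: "{1-H..<H} = {1-H..<0} \<union> ({0} \<union> {1..<H})" using assms by auto
  have "(\<Sum>d\<in>{1-H..<H}. g d) = (\<Sum>d\<in>{1-H..<0}. g d) + (g 0 + (\<Sum>d\<in>{1..<H}. g d))"
    unfolding split by (subst sum.union_disjoint; auto)+
  moreover have "(\<Sum>d\<in>{1-H..<0}. g d) = (\<Sum>d\<in>{1..<H}. g d)"
  proof -
    have "(\<Sum>d\<in>{1-H..<0}. g d) = sum g (uminus ` {1..<H})"
    proof -
      have "uminus ` {1..<H} = {1-H..<0}"
      proof
        show "uminus ` {1..<H} \<subseteq> {1-H..<0}" by auto
        show "{1-H..<0} \<subseteq> uminus ` {1..<H}"
        proof
          fix x assume "x \<in> {1-H..<0}"
          then have "-x \<in> {1..<H}" "x = - (-x)" by auto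
          then show "x \<in> uminus ` {1..<H}" by blast
        qed
      qed
      then show ?thesis by simp
    qed
    also have "\<dots> = (\<Sum>d\<in>{1..<H}. g (- d))" by (subst sum.reindex) (auto simp: inj_on_def)
    also have "\<dots> = (\<Sum>d\<in>{1..<H}. g d)" using assms by simp
    finally show ?thesis .
  qed
  ultimately show ?thesis by simp
qed

lemma weyl_vdc:
  fixes z :: "int \<Rightarrow> complex" and a b H :: int
  assumes ab: "a \<le> b" and H: "H \<ge> 1"
    and supp: "\<forall>n. n \<notin> {a..<b} \<longrightarrow> z n = 0" and bd: "\<forall>n. norm (z n) \<le> 1"
  shows "(norm (\<Sum>n\<in>{a..<b}. z n))^2 \<le> (real_of_int (b - a + H - 1) / H) *
           (real_of_int (b - a) + 2 * (\<Sum>d\<in>{1..<H}. norm (\<Sum>n\<in>{a..<b}. z (n + d) * cnj (z n))))"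
proof -
  define S where "S = (\<Sum>n\<in>{a..<b}. z n)"
  define U where "U d = (\<Sum>n\<in>{a..<b}. z (n + d) * cnj (z n))" for d
  define T where "T = {a - H + 1..<b}"
  define v where "v t = (\<Sum>j\<in>{0..<H}. z (t + j))" for t
  have step1: "of_int H * S = (\<Sum>t\<in>T. v t)"
  proof -
    have "(\<Sum>t\<in>T. v t) = (\<Sum>j\<in>{0..<H}. \<Sum>t\<in>T. z (t + j))"
      unfolding v_def by (rule sum.swap)
    also have "\<dots> = (\<Sum>j\<in>{0..<H}. S)"
    proof (rule sum.cong[OF refl])
      fix j assume j: "j \<in> {0..<H}"
      have "(\<Sum>t\<in>T. z (t + j)) = (\<Sum>n\<in>{a - H + 1 + j..<b + j}. z n)"
        unfolding T_def by (rule sum_shift_int)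
      also have "\<dots> = S" unfolding S_def using j supp by (intro sum_window) auto
      finally show "(\<Sum>t\<in>T. z (t + j)) = S" .
    qed
    also have "\<dots> = of_int H * S" using H by simp
    finally show ?thesis by simp
  qed
  have cardT: "card T = nat (b - a + H - 1)" unfolding T_def by simp
  have step2: "(norm (\<Sum>t\<in>T. v t))^2 \<le> real (card T) * (\<Sum>t\<in>T. (norm (v t))^2)"
  proof -
    have "norm (\<Sum>t\<in>T. v t) \<le> (\<Sum>t\<in>T. norm (v t))" by (rule norm_sum)
    then have "(norm (\<Sum>t\<in>T. v t))^2 \<le> (\<Sum>t\<in>T. norm (v t))^2"
      by (intro power_mono) auto
    also have "\<dots> \<le> (\<Sum>t\<in>T. (norm (v t))^2) * card T" by (rule sum_squared_le_sum_of_squares)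
    finally show ?thesis by (simp add: mult.commute)
  qed
  have Ushift: "(\<Sum>t\<in>T. z (t + j) * cnj (z (t + j'))) = U (j - j')" if "j' \<in> {0..<H}" for j j'
  proof -
    have "(\<Sum>t\<in>T. z (t + j) * cnj (z (t + j'))) = (\<Sum>t\<in>T. (\<lambda>n. z (n + (j - j')) * cnj (z n)) (t + j'))"
      by (simp add: algebra_simps)
    also have "\<dots> = (\<Sum>n\<in>{a - H + 1 + j'..<b + j'}. z (n + (j - j')) * cnj (z n))"
      unfolding T_def by (rule sum_shift_int)
    also have "\<dots> = U (j - j')" unfolding U_def using that supp by (intro sum_window) auto
    finally show ?thesis .
  qed
  have step3: "(\<Sum>t\<in>T. (norm (v t))^2) \<le> (\<Sum>j\<in>{0..<H}. \<Sum>j'\<in>{0..<H}. norm (U (j - j')))"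
  proof -
    have "complex_of_real (\<Sum>t\<in>T. (norm (v t))^2) = (\<Sum>t\<in>T. v t * cnj (v t))"
      by (simp only: of_real_sum complex_norm_square)
    also have "\<dots> = (\<Sum>t\<in>T. \<Sum>j\<in>{0..<H}. \<Sum>j'\<in>{0..<H}. z (t + j) * cnj (z (t + j')))"
      unfolding v_def by (simp add: sum_product cnj_sum)
    also have "\<dots> = (\<Sum>j\<in>{0..<H}. \<Sum>t\<in>T. \<Sum>j'\<in>{0..<H}. z (t + j) * cnj (z (t + j')))"
      by (rule sum.swap)
    also have "\<dots> = (\<Sum>j\<in>{0..<H}. \<Sum>j'\<in>{0..<H}. \<Sum>t\<in>T. z (t + j) * cnj (z (t + j')))"
      by (intro sum.cong refl sum.swap)
    also have "\<dots> = (\<Sum>j\<in>{0..<H}. \<Sum>j'\<in>{0..<H}. U (j - j'))"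
      using Ushift by (intro sum.cong refl) auto
    finally have eq: "complex_of_real (\<Sum>t\<in>T. (norm (v t))^2) = (\<Sum>j\<in>{0..<H}. \<Sum>j'\<in>{0..<H}. U (j - j'))" .
    have "(\<Sum>t\<in>T. (norm (v t))^2) = norm (complex_of_real (\<Sum>t\<in>T. (norm (v t))^2))"
      by (subst norm_of_real) (simp add: sum_nonneg)
    also have "\<dots> \<le> (\<Sum>j\<in>{0..<H}. norm (\<Sum>j'\<in>{0..<H}. U (j - j')))" unfolding eq by (rule norm_sum)
    also have "\<dots> \<le> (\<Sum>j\<in>{0..<H}. \<Sum>j'\<in>{0..<H}. norm (U (j - j')))"
      by (intro sum_mono norm_sum)
    finally show ?thesis .
  qed
  have Usym: "norm (U (- d)) = norm (U d)" for d
  proof -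
    have "U (- d) = (\<Sum>n\<in>{a..<b}. (\<lambda>m. z m * cnj (z (m + d))) (n + - d))"
      unfolding U_def by simp
    also have "\<dots> = (\<Sum>m\<in>{a + - d..<b + - d}. z m * cnj (z (m + d)))" by (rule sum_shift_int)
    also have "\<dots> = (\<Sum>m\<in>{a..<b}. z m * cnj (z (m + d)))"
    proof -
      have "(\<Sum>m\<in>{a + - d..<b + - d}. z m * cnj (z (m + d))) = (\<Sum>m\<in>{min a (a-d)..<max b (b-d)}. z m * cnj (z (m + d)))"
        using supp by (intro sum.mono_neutral_left) auto
      also have "\<dots> = (\<Sum>m\<in>{a..<b}. z m * cnj (z (m + d)))"
        using supp by (intro sum.mono_neutral_right) auto
      finally show ?thesis .
    qed
    also have "\<dots> = cnj (U d)" unfolding U_def by (simp add: cnj_sum mult.commute)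
    finally show ?thesis by simp
  qed
  have step5: "(\<Sum>j'\<in>{0..<H}. norm (U (j - j'))) \<le> (\<Sum>d\<in>{1-H..<H}. norm (U d))" if j: "j \<in> {0..<H}" for j
  proof -
    have "(\<Sum>j'\<in>{0..<H}. norm (U (j - j'))) = (\<Sum>d\<in>(\<lambda>j'. j - j') ` {0..<H}. norm (U d))"
      by (subst sum.reindex) (auto simp: inj_on_def)
    also have "\<dots> \<le> (\<Sum>d\<in>{1-H..<H}. norm (U d))"
      using j by (intro sum_mono2) auto
    finally show ?thesis .
  qed
  have U0: "norm (U 0) \<le> real_of_int (b - a)"
  proof -
    have "norm (U 0) \<le> (\<Sum>n\<in>{a..<b}. norm (z n * cnj (z n)))" unfolding U_def by (simp add: norm_sum)
    also have "\<dots> \<le> (\<Sum>n\<in>{a..<b}. 1)"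
      using bd by (intro sum_mono) (simp add: norm_mult mult_le_one)
    also have "\<dots> = real_of_int (b - a)" using ab by simp
    finally show ?thesis .
  qed
  define R where "R = real_of_int (b - a) + 2 * (\<Sum>d\<in>{1..<H}. norm (U d))"
  have sumsym: "(\<Sum>d\<in>{1-H..<H}. norm (U d)) \<le> R"
    using sum_sym_int[of "\<lambda>d. norm (U d)" H] Usym H U0 unfolding R_def by simp
  have "(\<Sum>t\<in>T. (norm (v t))^2) \<le> (\<Sum>j\<in>{0..<H}. R)"
    using step3 step5 sumsym by (smt (verit, ccfv_SIG) sum_mono)
  also have "\<dots> = real_of_int H * R" using H by simp
  finally have s35: "(\<Sum>t\<in>T. (norm (v t))^2) \<le> real_of_int H * R" .
  have "(real_of_int H)^2 * (norm S)^2 = (norm (\<Sum>t\<in>T. v t))^2"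
    using step1[symmetric] H by (simp add: norm_mult power_mult_distrib)
  also have "\<dots> \<le> real (card T) * (real_of_int H * R)"
    using step2 s35 by (smt (verit) mult_left_mono of_nat_0_le_iff)
  also have "real (card T) = real_of_int (b - a + H - 1)" using cardT ab H by simp
  finally have main: "(real_of_int H)^2 * (norm S)^2 \<le> real_of_int (b - a + H - 1) * (real_of_int H * R)" .
  have Hp: "real_of_int H > 0" using H by simp
  have "real_of_int H * (real_of_int H * (norm S)^2) \<le> real_of_int H * (real_of_int (b - a + H - 1) * R)"
    using main by (simp add: power2_eq_square mult_ac)
  then have "real_of_int H * (norm S)^2 \<le> real_of_int (b - a + H - 1) * R"
    using Hp by (simp add: mult_le_cancel_left_pos)
  then have "(norm S)^2 \<le> real_of_int (b - a + H - 1) * R / real_of_int H"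
    using Hp by (simp add: field_simps)
  then show ?thesis unfolding S_def R_def U_def by (simp add: field_simps)
qed

fun Dop :: "nat list \<Rightarrow> ('a::semiring_1 \<Rightarrow> real) \<Rightarrow> 'a \<Rightarrow> real" where
  "Dop [] \<phi> x = \<phi> x"
| "Dop (r # rs) \<phi> x = Dop rs \<phi> (x + of_nat r) - Dop rs \<phi> x"

lemma Dop_int_real:
  fixes \<phi> :: "real \<Rightarrow> real" and n :: int
  shows "Dop rs (\<lambda>k. \<phi> (of_int k)) n = Dop rs \<phi> (of_int n)"
  by (induction rs arbitrary: n) auto

lemma Dop_deriv:
  fixes F :: "nat \<Rightarrow> real \<Rightarrow> real"
  assumes der: "\<And>j y. y > 0 \<Longrightarrow> (F j has_real_derivative F (Suc j) y) (at y)"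
  shows "y > 0 \<Longrightarrow> (Dop rs (F j) has_real_derivative Dop rs (F (Suc j)) y) (at y)"
proof (induction rs arbitrary: y)
  case Nil
  then show ?case using der by simp
next
  case (Cons r rs)
  have h1: "((\<lambda>x. Dop rs (F j) (x + real r)) has_real_derivative Dop rs (F (Suc j)) (y + real r)) (at y)"
    using Cons.IH[of "y + real r"] Cons.prems by (subst DERIV_shift[symmetric]) simp
  have h2: "(Dop rs (F j) has_real_derivative Dop rs (F (Suc j)) y) (at y)"
    using Cons.IH Cons.prems by simp
  have "((\<lambda>x. Dop rs (F j) (x + real r) - Dop rs (F j) x) has_real_derivative
        Dop rs (F (Suc j)) (y + real r) - Dop rs (F (Suc j)) y) (at y)"
    by (rule DERIV_diff[OF h1 h2])
  then show ?case by (simp add: fun_eq_iff)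
qed

lemma Dop_bounds:
  fixes F :: "nat \<Rightarrow> real \<Rightarrow> real"
  assumes der: "\<And>j y. y > 0 \<Longrightarrow> (F j has_real_derivative F (Suc j) y) (at y)"
  shows "x > 0 \<Longrightarrow> (\<And>y. x \<le> y \<Longrightarrow> y \<le> x + real (sum_list rs) \<Longrightarrow> lo \<le> F (j + length rs) y \<and> F (j + length rs) y \<le> hi) \<Longrightarrow>
     real (prod_list rs) * lo \<le> Dop rs (F j) x \<and> Dop rs (F j) x \<le> real (prod_list rs) * hi"
proof (induction rs arbitrary: j x)
  case Nil
  then show ?case by simp
next
  case (Cons r rs)
  show ?case
  proof (cases "r = 0")
    case True
    then show ?thesis by simp
  next
    case False
    have "\<exists>\<xi>. x < \<xi> \<and> \<xi> < x + real r \<and>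
           Dop rs (F j) (x + real r) - Dop rs (F j) x = (x + real r - x) * Dop rs (F (Suc j)) \<xi>"
      using False Cons.prems(1)
      by (intro MVT2) (auto intro!: Dop_deriv[where F=F, OF der])
    then obtain \<xi> where xi: "x < \<xi>" "\<xi> < x + real r"
      and eq: "Dop rs (F j) (x + real r) - Dop rs (F j) x = real r * Dop rs (F (Suc j)) \<xi>" by auto
    have "real (prod_list rs) * lo \<le> Dop rs (F (Suc j)) \<xi> \<and> Dop rs (F (Suc j)) \<xi> \<le> real (prod_list rs) * hi"
    proof (rule Cons.IH)
      show "\<xi> > 0" using xi Cons.prems by simp
      fix y assume "\<xi> \<le> y" "y \<le> \<xi> + real (sum_list rs)"
      then show "lo \<le> F (Suc j + length rs) y \<and> F (Suc j + length rs) y \<le> hi"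
        using Cons.prems(2)[of y] xi by simp
    qed
    then have "real r * (real (prod_list rs) * lo) \<le> real r * Dop rs (F (Suc j)) \<xi> \<and>
               real r * Dop rs (F (Suc j)) \<xi> \<le> real r * (real (prod_list rs) * hi)"
      by (auto intro: mult_left_mono)
    then show ?thesis using eq by (simp add: mult_ac)
  qed
qed

lemma weyl_level:
  fixes \<psi> :: "int \<Rightarrow> real" and a len H :: int and N Y :: real
  assumes H: "H \<ge> 1" and len: "real_of_int len \<le> N" and Y: "Y \<ge> 0" and N0: "N \<ge> 0"
    and hyp: "\<And>d. d \<in> {1..<H} \<Longrightarrow> norm (\<Sum>n\<in>{a..<a + len - d}. e (\<psi> (n + d) - \<psi> n)) \<le> Y"
  shows "(norm (\<Sum>n\<in>{a..<a + len}. e (\<psi> n)))^2 \<le> (N + H - 1) / H * (N + 2 * (H - 1) * Y)"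
proof (cases "len \<ge> 0")
  case False
  then have "{a..<a + len} = {}" by auto
  moreover have "0 \<le> (N + H - 1) / H * (N + 2 * (H - 1) * Y)"
    using H Y N0 by (intro mult_nonneg_nonneg divide_nonneg_nonneg) auto
  ultimately show ?thesis by simp
next
  case True
  define b where "b = a + len"
  define z where "z n = (if n \<in> {a..<b} then e (\<psi> n) else 0)" for n
  have supp: "\<forall>n. n \<notin> {a..<b} \<longrightarrow> z n = 0" by (simp add: z_def)
  have bd: "\<forall>n. norm (z n) \<le> 1" by (simp add: z_def)
  have W: "(norm (\<Sum>n\<in>{a..<b}. z n))^2 \<le> (real_of_int (b - a + H - 1) / H) *
           (real_of_int (b - a) + 2 * (\<Sum>d\<in>{1..<H}. norm (\<Sum>n\<in>{a..<b}. z (n + d) * cnj (z n))))"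
    using True H supp bd unfolding b_def by (intro weyl_vdc) auto
  have Ud: "(\<Sum>n\<in>{a..<b}. z (n + d) * cnj (z n)) = (\<Sum>n\<in>{a..<a + len - d}. e (\<psi> (n + d) - \<psi> n))"
    if d: "d \<in> {1..<H}" for d
  proof -
    have "(\<Sum>n\<in>{a..<b}. z (n + d) * cnj (z n)) = (\<Sum>n\<in>{a..<a + len - d}. z (n + d) * cnj (z n))"
    proof (cases "a + len - d \<ge> a")
      case True
      then show ?thesis using d unfolding b_def z_def
        by (intro sum.mono_neutral_right) auto
    next
      case False
      then have "{a..<a + len - d} = {}" by auto
      moreover have "(\<Sum>n\<in>{a..<b}. z (n + d) * cnj (z n)) = 0"
        using False d unfolding b_def z_def by (intro sum.neutral) auto
      ultimately show ?thesis by simp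
    qed
    also have "\<dots> = (\<Sum>n\<in>{a..<a + len - d}. e (\<psi> (n + d) - \<psi> n))"
      using d unfolding b_def z_def by (intro sum.cong refl) (auto simp: e_diff)
    finally show ?thesis .
  qed
  have S: "(\<Sum>n\<in>{a..<b}. z n) = (\<Sum>n\<in>{a..<a + len}. e (\<psi> n))"
    unfolding b_def z_def by simp
  have sumY: "(\<Sum>d\<in>{1..<H}. norm (\<Sum>n\<in>{a..<b}. z (n + d) * cnj (z n))) \<le> (H - 1) * Y"
  proof -
    have "(\<Sum>d\<in>{1..<H}. norm (\<Sum>n\<in>{a..<b}. z (n + d) * cnj (z n))) \<le> (\<Sum>d\<in>{1..<H}. Y)"
      using Ud hyp by (intro sum_mono) auto
    also have "\<dots> = (H - 1) * Y" using H by simp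
    finally show ?thesis .
  qed
  have "(real_of_int (b - a + H - 1) / H) *
           (real_of_int (b - a) + 2 * (\<Sum>d\<in>{1..<H}. norm (\<Sum>n\<in>{a..<b}. z (n + d) * cnj (z n))))
        \<le> (N + H - 1) / H * (N + 2 * (H - 1) * Y)"
  proof -
    let ?Q = "(\<Sum>d\<in>{1..<H}. norm (\<Sum>n\<in>{a..<b}. z (n + d) * cnj (z n)))"
    have A: "real_of_int (b - a + H - 1) / H \<le> (N + H - 1) / H"
      using len H unfolding b_def by (intro divide_right_mono) auto
    have B: "real_of_int (b - a) + 2 * ?Q \<le> N + 2 * (H - 1) * Y"
      using len sumY unfolding b_def by (simp add: algebra_simps)
    have C: "0 \<le> real_of_int (b - a) + 2 * ?Q" using True unfolding b_def by (simp add: sum_nonneg)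
    have D: "0 \<le> (N + H - 1) / H" using H N0 by simp
    show ?thesis by (rule mult_mono[OF A B D C])
  qed
  then show ?thesis using W S by simp
qed

fun okl :: "(nat \<Rightarrow> int) \<Rightarrow> nat list \<Rightarrow> bool" where
  "okl G [] = True"
| "okl G (d # rs) = (1 \<le> d \<and> int d < G (length rs) \<and> okl G rs)"

lemma weyl_iter:
  fixes g :: "int \<Rightarrow> real" and a :: int and M :: nat and N :: real and X :: "nat \<Rightarrow> real"
    and G :: "nat \<Rightarrow> int"
  assumes MN: "real M \<le> N"
    and base: "\<And>rs. length rs = q \<Longrightarrow> okl G rs \<Longrightarrow>
        norm (\<Sum>n\<in>{a..<a + int M - int (sum_list rs)}. e (Dop rs g n)) \<le> X q"
    and G1: "\<And>j. j < q \<Longrightarrow> G j \<ge> 1"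
    and Xnn: "\<And>j. j \<le> q \<Longrightarrow> X j \<ge> 0"
    and Xrec: "\<And>j. j < q \<Longrightarrow> (N + G j - 1) / G j * (N + 2 * (G j - 1) * X (Suc j)) \<le> (X j)^2"
  shows "norm (\<Sum>n\<in>{a..<a + int M}. e (g n)) \<le> X 0"
proof -
  have main: "\<forall>rs. length rs = q - i \<and> okl G rs \<longrightarrow>
        norm (\<Sum>n\<in>{a..<a + int M - int (sum_list rs)}. e (Dop rs g n)) \<le> X (q - i)" if "i \<le> q" for i
    using that
  proof (induction i)
    case 0
    then show ?case using base by simp
  next
    case (Suc i)
    show ?case
    proof (intro allI impI)
      fix rs assume rs: "length rs = q - Suc i \<and> okl G rs"
      define j where "j = q - Suc i"
      have jq: "j < q" and Sj: "Suc j = q - i" using Suc.prems unfolding j_def by auto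
      define len where "len = int M - int (sum_list rs)"
      have hyp: "norm (\<Sum>n\<in>{a..<a + len - d}. e (Dop rs g (n + d) - Dop rs g n)) \<le> X (Suc j)"
        if d: "d \<in> {1..<G j}" for d
      proof -
        have dn: "d = int (nat d)" using d by simp
        have l: "length (nat d # rs) = q - i" "okl G (nat d # rs)"
          using rs d Sj unfolding j_def by auto
        have IH: "\<forall>rs. length rs = q - i \<and> okl G rs \<longrightarrow>
          norm (\<Sum>n\<in>{a..<a + int M - int (sum_list rs)}. e (Dop rs g n)) \<le> X (q - i)"
          using Suc.IH Suc.prems by simp
        have "norm (\<Sum>n\<in>{a..<a + int M - int (sum_list (nat d # rs))}. e (Dop (nat d # rs) g n)) \<le> X (q - i)"
          using IH l by blast
        moreover have "{a..<a + int M - int (sum_list (nat d # rs))} = {a..<a + len - d}"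
          unfolding len_def using d by auto
        moreover have "Dop (nat d # rs) g n = Dop rs g (n + d) - Dop rs g n" for n
          using dn by simp
        ultimately show ?thesis using Sj by (simp only:)
      qed
      have "(norm (\<Sum>n\<in>{a..<a + len}. e (Dop rs g n)))^2 \<le> (N + G j - 1) / G j * (N + 2 * (G j - 1) * X (Suc j))"
      proof (rule weyl_level)
        show "1 \<le> G j" using G1 jq by simp
        show "real_of_int len \<le> N" unfolding len_def using MN by simp
        show "0 \<le> X (Suc j)" using Xnn jq by simp
        show "0 \<le> N" using MN of_nat_0_le_iff order_trans by blast
      qed (rule hyp)
      also have "\<dots> \<le> (X j)^2" using Xrec jq by simp
      finally have "norm (\<Sum>n\<in>{a..<a + len}. e (Dop rs g n)) \<le> X j"
        using Xnn[of j] jq by (simp add: power2_le_iff_abs_le)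
      then show "norm (\<Sum>n\<in>{a..<a + int M - int (sum_list rs)}. e (Dop rs g n)) \<le> X (q - Suc i)"
        unfolding len_def j_def by (simp add: algebra_simps)
    qed
  qed
  show ?thesis using main[of q] by simp
qed

definition ff :: "real \<Rightarrow> nat \<Rightarrow> real" where
  "ff s n = (\<Prod>i<n. s - real i)"

lemma ff_0 [simp]: "ff s 0 = 1" by (simp add: ff_def)
lemma ff_Suc: "ff s (Suc n) = ff s n * (s - real n)" by (simp add: ff_def)

definition Fh :: "real \<Rightarrow> nat \<Rightarrow> nat \<Rightarrow> (nat \<Rightarrow> int) \<Rightarrow> nat \<Rightarrow> real \<Rightarrow> real" where
  "Fh c m L h j x = (1 / real m) * ff c j * (\<Sum>l<L. real_of_int (h l) * (x + real l) powr (c - real j))"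

definition Mom :: "nat \<Rightarrow> (nat \<Rightarrow> int) \<Rightarrow> nat \<Rightarrow> int" where
  "Mom L h i = (\<Sum>l<L. h l * int l ^ i)"

lemma powr_deriv_shift:
  assumes "x + l > 0"
  shows "((\<lambda>x. (x + l) powr r) has_real_derivative r * (x + l) powr (r - 1)) (at x)"
  using assms by (auto intro!: derivative_eq_intros)

lemma Fh_deriv:
  assumes "x > 0"
  shows "(Fh c m L h j has_real_derivative Fh c m L h (Suc j) x) (at x)"
proof -
  have "((\<lambda>x. \<Sum>l<L. real_of_int (h l) * (x + real l) powr (c - real j)) has_real_derivative
      (\<Sum>l<L. real_of_int (h l) * ((c - real j) * (x + real l) powr (c - real j - 1)))) (at x)"
    by (intro DERIV_sum DERIV_cmult powr_deriv_shift) (use assms in auto)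
  then have "((\<lambda>x. (1 / real m) * ff c j * (\<Sum>l<L. real_of_int (h l) * (x + real l) powr (c - real j)))
     has_real_derivative (1 / real m) * ff c j * (\<Sum>l<L. real_of_int (h l) * ((c - real j) * (x + real l) powr (c - real j - 1)))) (at x)"
    by (rule DERIV_cmult)
  moreover have "(1 / real m) * ff c j * (\<Sum>l<L. real_of_int (h l) * ((c - real j) * (x + real l) powr (c - real j - 1)))
     = Fh c m L h (Suc j) x"
    unfolding Fh_def ff_Suc by (simp add: sum_distrib_left algebra_simps)
  moreover have "Fh c m L h j = (\<lambda>x. (1 / real m) * ff c j * (\<Sum>l<L. real_of_int (h l) * (x + real l) powr (c - real j)))"
    by (simp add: Fh_def fun_eq_iff)
  ultimately show ?thesis by simp
qed

lemma taylor_powr: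
  fixes s x l :: real and n :: nat
  assumes x: "x > 0" and l: "l \<ge> 0" and n: "n \<ge> 1" and sn: "s - real n \<le> 0"
  shows "\<bar>(x + l) powr s - (\<Sum>i<n. ff s i / fact i * x powr (s - real i) * l ^ i)\<bar>
           \<le> \<bar>ff s n\<bar> / fact n * l ^ n * x powr (s - real n)"
proof (cases "l = 0")
  case True
  have "(\<Sum>i<n. ff s i / fact i * x powr (s - real i) * l ^ i) = (\<Sum>i\<in>{0}. ff s i / fact i * x powr (s - real i) * l ^ i)"
    using True n by (intro sum.mono_neutral_right) auto
  then show ?thesis using True n by simp
next
  case False
  define diff where "diff i t = ff s i * t powr (s - real i)" for i t
  have D: "\<forall>m t. m < n \<and> x \<le> t \<and> t \<le> x + l \<longrightarrow> DERIV (diff m) t :> diff (Suc m) t"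
  proof (intro allI impI)
    fix m t assume "m < n \<and> x \<le> t \<and> t \<le> x + l"
    then have t: "t > 0" using x by auto
    have d1: "((\<lambda>t. ff s m * t powr (s - real m)) has_real_derivative ff s m * ((s - real m) * t powr (s - real m - 1))) (at t)"
      using t by (intro DERIV_cmult has_real_derivative_powr)
    have e1: "ff s m * ((s - real m) * t powr (s - real m - 1)) = diff (Suc m) t"
      by (simp add: diff_def ff_Suc algebra_simps)
    have e2: "diff m = (\<lambda>t. ff s m * t powr (s - real m))" by (simp add: diff_def fun_eq_iff)
    show "DERIV (diff m) t :> diff (Suc m) t" using d1 unfolding e1 e2 .
  qed
  have "\<exists>t. x < t \<and> t < x + l \<and>
    (\<lambda>t. t powr s) (x + l) = (\<Sum>m<n. (diff m x / fact m) * (x + l - x)^m) + (diff n t / fact n) * (x + l - x)^n"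
    by (rule Taylor_up[OF _ _ D]) (use n False l in \<open>auto simp: diff_def fun_eq_iff\<close>)
  then obtain t where t: "x < t" "t < x + l"
    and eq: "(x + l) powr s = (\<Sum>m<n. (diff m x / fact m) * l^m) + (diff n t / fact n) * l^n" by auto
  have "(\<Sum>m<n. (diff m x / fact m) * l^m) = (\<Sum>i<n. ff s i / fact i * x powr (s - real i) * l ^ i)"
    unfolding diff_def by (simp add: algebra_simps)
  then have "\<bar>(x + l) powr s - (\<Sum>i<n. ff s i / fact i * x powr (s - real i) * l ^ i)\<bar> = \<bar>diff n t / fact n * l^n\<bar>"
    using eq by simp
  also have "\<dots> = \<bar>ff s n\<bar> / fact n * l ^ n * t powr (s - real n)"
    unfolding diff_def using l by (simp add: abs_mult)
  also have "\<dots> \<le> \<bar>ff s n\<bar> / fact n * l ^ n * x powr (s - real n)"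
    using t x sn l by (intro mult_left_mono powr_mono2') auto
  finally show ?thesis .
qed

lemma moment_expansion:
  fixes s x :: real and h :: "nat \<Rightarrow> int" and B :: real
  assumes x: "x > 0" and mom0: "\<forall>i<k0. Mom L h i = 0" and sk: "s - real (Suc k0) \<le> 0"
    and B: "\<forall>l<L. \<bar>real_of_int (h l)\<bar> \<le> B"
  shows "\<bar>(\<Sum>l<L. real_of_int (h l) * (x + real l) powr s) - ff s k0 / fact k0 * real_of_int (Mom L h k0) * x powr (s - real k0)\<bar>
     \<le> real L * B * (\<bar>ff s (Suc k0)\<bar> / fact (Suc k0) * real L ^ Suc k0 * x powr (s - real (Suc k0)))"
proof -
  define P where "P l = (\<Sum>i<Suc k0. ff s i / fact i * x powr (s - real i) * real l ^ i)" for l :: nat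
  define E where "E = \<bar>ff s (Suc k0)\<bar> / fact (Suc k0) * real L ^ Suc k0 * x powr (s - real (Suc k0))"
  have Pl: "\<bar>(x + real l) powr s - P l\<bar> \<le> E" if "l < L" for l
  proof -
    have "\<bar>(x + real l) powr s - P l\<bar> \<le> \<bar>ff s (Suc k0)\<bar> / fact (Suc k0) * real l ^ Suc k0 * x powr (s - real (Suc k0))"
      unfolding P_def using x sk by (intro taylor_powr) auto
    also have "\<dots> \<le> E" unfolding E_def using that
      by (intro mult_right_mono mult_left_mono power_mono) auto
    finally show ?thesis .
  qed
  have sumP: "(\<Sum>l<L. real_of_int (h l) * P l) = ff s k0 / fact k0 * real_of_int (Mom L h k0) * x powr (s - real k0)"
  proof -
    have "(\<Sum>l<L. real_of_int (h l) * P l) = (\<Sum>l<L. \<Sum>i<Suc k0. real_of_int (h l) * (ff s i / fact i * x powr (s - real i) * real l ^ i))"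
      unfolding P_def by (simp only: sum_distrib_left)
    also have "\<dots> = (\<Sum>i<Suc k0. \<Sum>l<L. real_of_int (h l) * (ff s i / fact i * x powr (s - real i) * real l ^ i))"
      by (rule sum.swap)
    also have "\<dots> = (\<Sum>i<Suc k0. ff s i / fact i * x powr (s - real i) * (\<Sum>l<L. real_of_int (h l) * real l ^ i))"
      by (intro sum.cong refl) (simp add: sum_distrib_left sum_divide_distrib mult_ac)
    also have "\<dots> = (\<Sum>i<Suc k0. ff s i / fact i * x powr (s - real i) * real_of_int (Mom L h i))"
      unfolding Mom_def by simp
    also have "\<dots> = (\<Sum>i\<in>{k0}. ff s i / fact i * x powr (s - real i) * real_of_int (Mom L h i))"
      using mom0 by (intro sum.mono_neutral_right) auto
    finally show ?thesis by simp
  qed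
  have "\<bar>(\<Sum>l<L. real_of_int (h l) * (x + real l) powr s) - (\<Sum>l<L. real_of_int (h l) * P l)\<bar>
        = \<bar>\<Sum>l<L. real_of_int (h l) * ((x + real l) powr s - P l)\<bar>"
    by (simp add: sum_subtractf algebra_simps)
  also have "\<dots> \<le> (\<Sum>l<L. \<bar>real_of_int (h l) * ((x + real l) powr s - P l)\<bar>)" by (rule sum_abs)
  also have "\<dots> \<le> (\<Sum>l<L. B * E)"
  proof (intro sum_mono)
    fix l assume "l \<in> {..<L}"
    then have "\<bar>real_of_int (h l)\<bar> \<le> B" "\<bar>(x + real l) powr s - P l\<bar> \<le> E" using B Pl by auto
    then show "\<bar>real_of_int (h l) * ((x + real l) powr s - P l)\<bar> \<le> B * E"
      unfolding abs_mult by (intro mult_mono) auto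
  qed
  also have "\<dots> = real L * B * E" by simp
  finally show ?thesis using sumP unfolding E_def by simp
qed

lemma moments_nonzero:
  fixes h :: "nat \<Rightarrow> int"
  assumes "\<exists>l<L. h l \<noteq> 0"
  shows "\<exists>i<L. Mom L h i \<noteq> 0"
proof (rule ccontr)
  assume "\<not> (\<exists>i<L. Mom L h i \<noteq> 0)"
  then have M0: "\<forall>i<L. Mom L h i = 0" by auto
  obtain l0 where l0: "l0 < L" "h l0 \<noteq> 0" using assms by auto
  define p :: "int poly" where "p = (\<Prod>j\<in>{..<L} - {l0}. [:- int j, 1:])"
  have "degree p \<le> sum (degree \<circ> (\<lambda>j. [:- int j, 1:])) ({..<L} - {l0})"
    unfolding p_def by (rule degree_prod_sum_le) simp
  also have "\<dots> = card ({..<L} - {l0})" by simp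
  also have "\<dots> < L" using l0 by (simp add: card_Diff_singleton)
  finally have degp: "degree p < L" .
  have "(\<Sum>l<L. h l * poly p (int l)) = (\<Sum>l<L. \<Sum>i\<le>degree p. h l * (coeff p i * int l ^ i))"
    by (simp add: poly_altdef sum_distrib_left)
  also have "\<dots> = (\<Sum>i\<le>degree p. \<Sum>l<L. h l * (coeff p i * int l ^ i))" by (rule sum.swap)
  also have "\<dots> = (\<Sum>i\<le>degree p. coeff p i * Mom L h i)"
    unfolding Mom_def by (intro sum.cong refl) (simp add: sum_distrib_left mult_ac)
  also have "\<dots> = 0" using M0 degp by (intro sum.neutral) auto
  finally have z: "(\<Sum>l<L. h l * poly p (int l)) = 0" .
  have pl: "poly p (int l) = 0" if "l < L" "l \<noteq> l0" for l
    unfolding p_def poly_prod using that by (intro prod_zero) auto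
  have "(\<Sum>l<L. h l * poly p (int l)) = (\<Sum>l\<in>{l0}. h l * poly p (int l))"
    using l0 pl by (intro sum.mono_neutral_right) auto
  also have "\<dots> = h l0 * poly p (int l0)" by simp
  finally have "h l0 * poly p (int l0) = 0" using z by simp
  moreover have "poly p (int l0) \<noteq> 0"
    unfolding p_def poly_prod by (subst prod_zero_iff) auto
  ultimately show False using l0 by simp
qed

locale vdc =
  fixes c :: real and m :: nat and k0 :: nat
  assumes c1: "c > 1" and cZ: "c \<notin> \<int>" and m0: "m > 0" and k0k: "k0 \<le> nat \<lfloor>c\<rfloor>"
begin

definition "k = nat \<lfloor>c\<rfloor>"
definition "LL = k + 1"
definition "fc = frac c"
definition "eta = dist_int c / 2 powr (c + 1)"
definition "q = k - k0"

lemma fc_pos: "0 < fc" and fc_lt1: "fc < 1"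
  using cZ frac_lt_1[of c] frac_ge_0[of c] unfolding fc_def
  by (auto simp: order.order_iff_strict)

lemma c_eq: "c = real k + fc"
proof -
  have "\<lfloor>c\<rfloor> \<ge> 1" using c1 by (simp add: le_floor_iff)
  then show ?thesis unfolding k_def fc_def frac_def by simp
qed

lemma dist_pos: "0 < dist_int c" and dist_le_fc: "dist_int c \<le> fc" and dist_le: "dist_int c \<le> 1 - fc"
  using fc_pos fc_lt1 unfolding dist_int_def fc_def by auto

lemma eta_pos: "0 < eta"
  unfolding eta_def using dist_pos by simp

lemma two_pow_le: "(2::real) ^ (k + 1) \<le> 2 powr (c + 1)"
proof -
  have "(2::real) ^ (k + 1) = 2 powr (real (k + 1))" by (rule powr_realpow[symmetric]) simp
  also have "\<dots> \<le> 2 powr (c + 1)" using c_eq fc_pos by (intro powr_mono) auto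
  finally show ?thesis .
qed

lemma eta_pow_le: "j \<le> k \<Longrightarrow> (2::real) ^ j * eta \<le> fc"
proof -
  assume j: "j \<le> k"
  have "(2::real) ^ j \<le> 2 ^ (k + 1)" using j by (intro power_increasing) auto
  also have "\<dots> \<le> 2 powr (c + 1)" by (rule two_pow_le)
  finally have "(2::real) ^ j * eta \<le> 2 powr (c + 1) * eta" using eta_pos by (intro mult_right_mono) auto
  also have "\<dots> = dist_int c" unfolding eta_def by simp
  finally show ?thesis using dist_le_fc by simp
qed

lemma eta_sum_lt: "j \<le> k \<Longrightarrow> ((2::real) ^ (j + 1) - 1) * eta < 1 - fc"
proof -
  assume j: "j \<le> k"
  have "(2::real) ^ (j + 1) - 1 < 2 ^ (k + 1)"
  proof -
    have "(2::real) ^ (j + 1) \<le> 2 ^ (k + 1)" using j by (intro power_increasing) auto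
    then show ?thesis by linarith
  qed
  also have "\<dots> \<le> 2 powr (c + 1)" by (rule two_pow_le)
  finally have "((2::real) ^ (j + 1) - 1) * eta < 2 powr (c + 1) * eta" using eta_pos by (intro mult_strict_right_mono) auto
  also have "\<dots> = dist_int c" unfolding eta_def by simp
  finally show ?thesis using dist_le by simp
qed

lemma eta_lt1: "eta < 1"
  using eta_pow_le[of 0] fc_lt1 by simp

lemma ff_nonzero: "ff (c - real j) n \<noteq> 0"
proof -
  have "c - real j - real i \<noteq> 0" for i
  proof
    assume "c - real j - real i = 0"
    then have "c = of_int (int j + int i)" by simp
    then show False using cZ by (metis Ints_of_int)
  qed
  then show ?thesis unfolding ff_def by (simp add: prod_zero_iff)
qed

lemma ff_nonzero0: "ff c n \<noteq> 0"
  using ff_nonzero[of 0 n] by simp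

definition "alpha h j = (1 / real m) * ff c j * (ff (c - real j) k0 / fact k0) * real_of_int (Mom LL h k0)"
definition "aj j = (1 / real m) * \<bar>ff c j\<bar> * \<bar>ff (c - real j) k0\<bar> / fact k0"
definition "Cj j = (1 / real m) * \<bar>ff c j\<bar> * (real LL * (\<bar>ff (c - real j) (Suc k0)\<bar> / fact (Suc k0) * real LL ^ Suc k0))"
definition "beta j = c - real j - real k0"

lemma aj_pos: "aj j > 0"
  unfolding aj_def using m0 ff_nonzero ff_nonzero0 by simp

lemma Cj_nonneg: "Cj j \<ge> 0"
  unfolding Cj_def by simp

lemma k0_q: "k0 + q = k"
  unfolding q_def k_def using k0k by simp

lemma beta_neg: "j \<ge> q + 1 \<Longrightarrow> beta j < 0"
  unfolding beta_def using c_eq k0_q fc_lt1 by simp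

lemma beta_q1: "beta (q + 1) = fc - 1"
  unfolding beta_def using c_eq k0_q by simp

lemma beta_q2: "beta (q + 2) = fc - 2"
  unfolding beta_def using c_eq k0_q by simp

lemma Fh_expansion:
  assumes x: "x > 0" and mom0: "\<forall>i<k0. Mom LL h i = 0" and j: "j \<ge> q + 1"
    and hb: "\<forall>l<LL. \<bar>real_of_int (h l)\<bar> \<le> hn"
  shows "\<bar>Fh c m LL h j x - alpha h j * x powr beta j\<bar> \<le> Cj j * hn * x powr (beta j - 1)"
proof -
  have sk: "(c - real j) - real (Suc k0) \<le> 0" using beta_neg[OF j] unfolding beta_def by simp
  have E: "\<bar>(\<Sum>l<LL. real_of_int (h l) * (x + real l) powr (c - real j)) - ff (c - real j) k0 / fact k0 * real_of_int (Mom LL h k0) * x powr ((c - real j) - real k0)\<bar>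
     \<le> real LL * hn * (\<bar>ff (c - real j) (Suc k0)\<bar> / fact (Suc k0) * real LL ^ Suc k0 * x powr ((c - real j) - real (Suc k0)))"
    by (rule moment_expansion[OF x mom0 sk hb])
  have "Fh c m LL h j x - alpha h j * x powr beta j =
      ((1 / real m) * ff c j) * ((\<Sum>l<LL. real_of_int (h l) * (x + real l) powr (c - real j)) - ff (c - real j) k0 / fact k0 * real_of_int (Mom LL h k0) * x powr ((c - real j) - real k0))"
    unfolding Fh_def alpha_def beta_def by (simp add: algebra_simps)
  then have "\<bar>Fh c m LL h j x - alpha h j * x powr beta j\<bar> =
      \<bar>(1 / real m) * ff c j\<bar> * \<bar>(\<Sum>l<LL. real_of_int (h l) * (x + real l) powr (c - real j)) - ff (c - real j) k0 / fact k0 * real_of_int (Mom LL h k0) * x powr ((c - real j) - real k0)\<bar>"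
    by (simp add: abs_mult)
  also have "\<dots> \<le> \<bar>(1 / real m) * ff c j\<bar> * (real LL * hn * (\<bar>ff (c - real j) (Suc k0)\<bar> / fact (Suc k0) * real LL ^ Suc k0 * x powr ((c - real j) - real (Suc k0))))"
    by (intro mult_left_mono E) simp
  also have "\<dots> = Cj j * hn * x powr (beta j - 1)"
    unfolding Cj_def beta_def using m0 by (simp add: abs_mult algebra_simps)
  finally show ?thesis .
qed

lemma Mom_bound:
  assumes hb: "\<forall>l<LL. \<bar>real_of_int (h l)\<bar> \<le> hn"
  shows "\<bar>real_of_int (Mom LL h i)\<bar> \<le> real LL * real LL ^ i * hn"
proof -
  have "\<bar>real_of_int (Mom LL h i)\<bar> = \<bar>\<Sum>l<LL. real_of_int (h l) * real l ^ i\<bar>" unfolding Mom_def by simp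
  also have "\<dots> \<le> (\<Sum>l<LL. \<bar>real_of_int (h l) * real l ^ i\<bar>)" by (rule sum_abs)
  also have "\<dots> \<le> (\<Sum>l<LL. hn * real LL ^ i)"
  proof (intro sum_mono)
    fix l assume l: "l \<in> {..<LL}"
    then have "\<bar>real_of_int (h l)\<bar> \<le> hn" using hb by auto
    moreover have "real l ^ i \<le> real LL ^ i" using l by (intro power_mono) auto
    ultimately show "\<bar>real_of_int (h l) * real l ^ i\<bar> \<le> hn * real LL ^ i"
      unfolding abs_mult by (intro mult_mono) auto
  qed
  also have "\<dots> = real LL * real LL ^ i * hn" by simp
  finally show ?thesis .
qed

lemma alpha_lower:
  assumes "Mom LL h k0 \<noteq> 0"
  shows "\<bar>alpha h j\<bar> \<ge> aj j"
proof -
  have "\<bar>real_of_int (Mom LL h k0)\<bar> \<ge> 1" using assms by linarith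
  then have "aj j * 1 \<le> aj j * \<bar>real_of_int (Mom LL h k0)\<bar>"
    using aj_pos[of j] by (intro mult_left_mono) auto
  also have "\<dots> = \<bar>alpha h j\<bar>" unfolding aj_def alpha_def by (simp add: abs_mult)
  finally show ?thesis by simp
qed

lemma alpha_upper:
  assumes hb: "\<forall>l<LL. \<bar>real_of_int (h l)\<bar> \<le> hn"
  shows "\<bar>alpha h j\<bar> \<le> aj j * (real LL * real LL ^ k0 * hn)"
proof -
  have "\<bar>alpha h j\<bar> = aj j * \<bar>real_of_int (Mom LL h k0)\<bar>" unfolding aj_def alpha_def by (simp add: abs_mult)
  also have "\<dots> \<le> aj j * (real LL * real LL ^ k0 * hn)"
    using aj_pos[of j] Mom_bound[OF hb] by (intro mult_left_mono) auto
  finally show ?thesis .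
qed

lemma leading:
  assumes x: "x \<ge> N" and N1: "N \<ge> 1" and hN: "hn \<le> N powr eta"
    and big: "2 * Cj j / aj j \<le> N powr (1 - eta)"
    and mom0: "\<forall>i<k0. Mom LL h i = 0" and momk: "Mom LL h k0 \<noteq> 0" and j: "j \<ge> q + 1"
    and hb: "\<forall>l<LL. \<bar>real_of_int (h l)\<bar> \<le> hn"
  shows "\<bar>Fh c m LL h j x - alpha h j * x powr beta j\<bar> \<le> \<bar>alpha h j\<bar> * x powr beta j / 2"
proof -
  have xp: "x > 0" using x N1 by simp
  have hn0: "hn \<ge> 0" using hb[rule_format, of 0] unfolding LL_def by simp
  have "\<bar>Fh c m LL h j x - alpha h j * x powr beta j\<bar> \<le> Cj j * hn * x powr (beta j - 1)"
    by (rule Fh_expansion[OF xp mom0 j hb])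
  also have "\<dots> = Cj j * hn / x * x powr beta j" using xp by (simp add: powr_diff)
  also have "\<dots> \<le> Cj j * N powr eta / N * x powr beta j"
  proof (intro mult_right_mono)
    have "Cj j * hn / x \<le> Cj j * hn / N" using x N1 Cj_nonneg[of j] hn0
      by (intro divide_left_mono mult_nonneg_nonneg) auto
    also have "\<dots> \<le> Cj j * N powr eta / N" using hN Cj_nonneg[of j] N1
      by (intro divide_right_mono mult_left_mono) auto
    finally show "Cj j * hn / x \<le> Cj j * N powr eta / N" .
  qed simp
  also have "\<dots> \<le> aj j / 2 * x powr beta j"
  proof (intro mult_right_mono)
    have "N powr eta / N = 1 / N powr (1 - eta)" using N1 by (simp add: powr_diff)
    then have "Cj j * N powr eta / N = Cj j / N powr (1 - eta)"
      by (metis times_divide_eq_right mult_1_right)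
    also have "\<dots> \<le> aj j / 2"
      using big aj_pos[of j] N1 by (simp add: field_simps)
    finally show "Cj j * N powr eta / N \<le> aj j / 2" .
  qed simp
  also have "\<dots> \<le> \<bar>alpha h j\<bar> / 2 * x powr beta j"
    using alpha_lower[OF momk, of j] by (intro mult_right_mono) auto
  finally show ?thesis by simp
qed

end

lemma exists_N_powr:
  fixes K \<epsilon> :: real
  assumes "\<epsilon> > 0"
  shows "\<exists>N0::nat. \<forall>N\<ge>N0. K \<le> real N powr \<epsilon>"
proof -
  define N0 where "N0 = nat \<lceil>max 1 K powr (1 / \<epsilon>)\<rceil>"
  have "K \<le> real N powr \<epsilon>" if N: "N \<ge> N0" for N
  proof -
    have "max 1 K powr (1 / \<epsilon>) \<le> real N" using N unfolding N0_def by linarith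
    then have "(max 1 K powr (1 / \<epsilon>)) powr \<epsilon> \<le> real N powr \<epsilon>"
      using assms by (intro powr_mono2) auto
    also have "(max 1 K powr (1 / \<epsilon>)) powr \<epsilon> = max 1 K"
      using assms by (simp add: powr_powr)
    finally show ?thesis by simp
  qed
  then show ?thesis by blast
qed

lemma norm_sum_e_neg: "norm (\<Sum>t\<in>A. e (- f t)) = norm (\<Sum>t\<in>A. e (f t))"
proof -
  have "(\<Sum>t\<in>A. e (- f t)) = cnj (\<Sum>t\<in>A. e (f t))" by (simp add: cnj_sum cnj_e)
  then show ?thesis by (simp only: complex_mod_cnj)
qed

lemma prod_okl:
  assumes "okl G rs" "\<forall>j. G j \<ge> 1"
  shows "1 \<le> prod_list rs \<and> real (prod_list rs) \<le> (\<Prod>j<length rs. real_of_int (G j))"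
  using assms
proof (induction rs)
  case Nil
  then show ?case by simp
next
  case (Cons d rs)
  then have d: "1 \<le> d" "int d < G (length rs)" and IH: "1 \<le> prod_list rs" "real (prod_list rs) \<le> (\<Prod>j<length rs. real_of_int (G j))"
    by auto
  have "real (prod_list (d # rs)) = real d * real (prod_list rs)" by simp
  also have "\<dots> \<le> real_of_int (G (length rs)) * (\<Prod>j<length rs. real_of_int (G j))"
    using d IH by (intro mult_mono) auto
  also have "\<dots> = (\<Prod>j<length (d # rs). real_of_int (G j))" by (simp add: mult.commute)
  finally show ?case using d IH by simp
qed

lemma sum_pow2: "(\<Sum>j<q. (2::real) ^ (j + 1)) = 2 ^ (q + 1) - 2"
  by (induction q) auto

lemma floor_half:
  fixes y :: real
  assumes "y \<ge> 1"
  shows "y / 2 \<le> real_of_int \<lfloor>y\<rfloor> \<and> real_of_int \<lfloor>y\<rfloor> \<le> y \<and> \<lfloor>y\<rfloor> \<ge> 1"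
proof -
  have a: "real_of_int \<lfloor>y\<rfloor> > y - 1" by linarith
  have b: "real_of_int \<lfloor>y\<rfloor> \<ge> 1" using assms by (simp add: le_floor_iff)
  have "y / 2 \<le> real_of_int \<lfloor>y\<rfloor>"
  proof (cases "y \<ge> 2")
    case True then show ?thesis using a by linarith
  next
    case False then show ?thesis using b by linarith
  qed
  then show ?thesis using b assms by (auto simp: le_floor_iff)
qed

lemma Dop_cmult:
  fixes f :: "'a::semiring_1 \<Rightarrow> real"
  shows "Dop rs (\<lambda>x. s * f x) x = s * Dop rs f x"
  by (induction rs arbitrary: x) (auto simp: algebra_simps)

lemma base_KL:
  fixes Fs :: "nat \<Rightarrow> real \<Rightarrow> real" and N :: nat and rs :: "nat list"
  assumes der: "\<And>j y. y > 0 \<Longrightarrow> (Fs j has_real_derivative Fs (Suc j) y) (at y)"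
    and N1: "N \<ge> 1" and len: "length rs = q"
    and A: "\<And>y. real N \<le> y \<Longrightarrow> y \<le> 2 * real N \<Longrightarrow> lo \<le> Fs (q + 1) y \<and> Fs (q + 1) y \<le> hi"
    and B: "(\<forall>y. real N \<le> y \<longrightarrow> y \<le> 2 * real N \<longrightarrow> 0 \<le> Fs (q + 2) y \<and> Fs (q + 2) y \<le> Bb) \<or>
            (\<forall>y. real N \<le> y \<longrightarrow> y \<le> 2 * real N \<longrightarrow> - Bb \<le> Fs (q + 2) y \<and> Fs (q + 2) y \<le> 0)"
    and P1: "1 \<le> prod_list rs" and Phi: "real (prod_list rs) * hi \<le> 1/2"
    and lo: "0 < lo"
  shows "norm (\<Sum>n\<in>{int N..<int N + int N - int (sum_list rs)}. e (Dop rs (\<lambda>n. Fs 0 (of_int n)) n)) \<le> 2 / lo"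
proof (cases "sum_list rs < N")
  case False
  then have "{int N..<int N + int N - int (sum_list rs)} = {}" by auto
  then show ?thesis using lo by simp
next
  case True
  define S where "S = sum_list rs"
  define Mn where "Mn = N - S"
  define \<phi> where "\<phi> t = Dop rs (Fs 0) (real N + real t)" for t
  have seteq: "{int N..<int N + int N - int (sum_list rs)} = (\<lambda>t. int N + int t) ` {..<Mn}"
  proof -
    have e1: "int Mn = (int N + int N - int (sum_list rs)) - int N" using True unfolding Mn_def S_def by simp
    have "{int N..<int N + int N - int (sum_list rs)} = (\<lambda>x. x + int N) ` {0..<int Mn}"
      unfolding e1 by (rule image_add_int_atLeastLessThan[symmetric])
    also have "{0..<int Mn} = int ` {..<Mn}" by (simp add: atLeast0LessThan[symmetric] image_int_atLeastLessThan)
    finally show ?thesis by (auto simp: image_image add.commute)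
  qed
  have sumeq: "(\<Sum>n\<in>{int N..<int N + int N - int (sum_list rs)}. e (Dop rs (\<lambda>n. Fs 0 (of_int n)) n)) = (\<Sum>t<Mn. e (\<phi> t))"
    unfolding seteq by (subst sum.reindex) (auto simp: inj_on_def \<phi>_def Dop_int_real)
  have loh: "lo \<le> hi" using A[of "real N"] N1 by auto
  have hi_half: "hi \<le> 1/2"
  proof -
    have "1 * hi \<le> real (prod_list rs) * hi" using P1 loh lo by (intro mult_right_mono) auto
    then show ?thesis using Phi by simp
  qed
  have dn: "\<forall>t. t + 1 < Mn \<longrightarrow> lo \<le> \<phi> (t+1) - \<phi> t \<and> \<phi> (t+1) - \<phi> t \<le> 1 - lo"
  proof (intro allI impI)
    fix t assume t: "t + 1 < Mn"
    have eq: "\<phi> (t+1) - \<phi> t = Dop (1 # rs) (Fs 0) (real N + real t)"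
    proof -
      have "real N + real (t + 1) = real N + real t + real (1::nat)" by simp
      then show ?thesis unfolding \<phi>_def by (simp only: Dop.simps)
    qed
    have "real (prod_list (1 # rs)) * lo \<le> Dop (1 # rs) (Fs 0) (real N + real t) \<and>
          Dop (1 # rs) (Fs 0) (real N + real t) \<le> real (prod_list (1 # rs)) * hi"
    proof (rule Dop_bounds[where F = Fs, OF der])
      show "real N + real t > 0" using N1 by simp
      fix y assume y: "real N + real t \<le> y" "y \<le> real N + real t + real (sum_list (1 # rs))"
      have "real t + 1 + real S \<le> real N" using t unfolding Mn_def by linarith
      then have "real N \<le> y \<and> y \<le> 2 * real N" using y unfolding S_def by simp
      then show "lo \<le> Fs (0 + length (1 # rs)) y \<and> Fs (0 + length (1 # rs)) y \<le> hi"
        using A len by simp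
    qed
    then have b: "real (prod_list rs) * lo \<le> \<phi> (t+1) - \<phi> t \<and> \<phi> (t+1) - \<phi> t \<le> real (prod_list rs) * hi"
      using eq by simp
    have "lo \<le> real (prod_list rs) * lo" using P1 lo by simp
    then show "lo \<le> \<phi> (t+1) - \<phi> t \<and> \<phi> (t+1) - \<phi> t \<le> 1 - lo"
      using b Phi hi_half loh by linarith
  qed
  have eq2: "(\<phi> (t+2) - \<phi> (t+1)) - (\<phi> (t+1) - \<phi> t) = Dop (1 # 1 # rs) (Fs 0) (real N + real t)" for t
    unfolding \<phi>_def by (simp add: add.assoc algebra_simps)
  have pts: "real N \<le> y \<and> y \<le> 2 * real N"
    if t: "t + 2 < Mn" and y: "real N + real t \<le> y" "y \<le> real N + real t + real (sum_list (1 # 1 # rs))" for t y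
  proof -
    have "real t + 2 + real S \<le> real N" using t unfolding Mn_def by linarith
    then show ?thesis using y unfolding S_def by simp
  qed
  have mono: "(\<forall>t. t + 2 < Mn \<longrightarrow> \<phi> (t+1) - \<phi> t \<le> \<phi> (t+2) - \<phi> (t+1)) \<or>
              (\<forall>t. t + 2 < Mn \<longrightarrow> \<phi> (t+2) - \<phi> (t+1) \<le> \<phi> (t+1) - \<phi> t)"
    using B
  proof
    assume B1: "\<forall>y. real N \<le> y \<longrightarrow> y \<le> 2 * real N \<longrightarrow> 0 \<le> Fs (q + 2) y \<and> Fs (q + 2) y \<le> Bb"
    have "\<phi> (t+1) - \<phi> t \<le> \<phi> (t+2) - \<phi> (t+1)" if t: "t + 2 < Mn" for t
    proof -
      have "real (prod_list (1 # 1 # rs)) * 0 \<le> Dop (1 # 1 # rs) (Fs 0) (real N + real t) \<and>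
            Dop (1 # 1 # rs) (Fs 0) (real N + real t) \<le> real (prod_list (1 # 1 # rs)) * Bb"
      proof (rule Dop_bounds[where F = Fs, OF der])
        show "real N + real t > 0" using N1 by simp
        fix y assume y: "real N + real t \<le> y" "y \<le> real N + real t + real (sum_list (1 # 1 # rs))"
        show "0 \<le> Fs (0 + length (1 # 1 # rs)) y \<and> Fs (0 + length (1 # 1 # rs)) y \<le> Bb"
          using B1 pts[OF t y] len by (simp add: numeral_2_eq_2)
      qed
      then show ?thesis using eq2[of t] by simp
    qed
    then show ?thesis by blast
  next
    assume B1: "\<forall>y. real N \<le> y \<longrightarrow> y \<le> 2 * real N \<longrightarrow> - Bb \<le> Fs (q + 2) y \<and> Fs (q + 2) y \<le> 0"
    have "\<phi> (t+2) - \<phi> (t+1) \<le> \<phi> (t+1) - \<phi> t" if t: "t + 2 < Mn" for t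
    proof -
      have "real (prod_list (1 # 1 # rs)) * (- Bb) \<le> Dop (1 # 1 # rs) (Fs 0) (real N + real t) \<and>
            Dop (1 # 1 # rs) (Fs 0) (real N + real t) \<le> real (prod_list (1 # 1 # rs)) * 0"
      proof (rule Dop_bounds[where F = Fs, OF der])
        show "real N + real t > 0" using N1 by simp
        fix y assume y: "real N + real t \<le> y" "y \<le> real N + real t + real (sum_list (1 # 1 # rs))"
        show "- Bb \<le> Fs (0 + length (1 # 1 # rs)) y \<and> Fs (0 + length (1 # 1 # rs)) y \<le> 0"
          using B1 pts[OF t y] len by (simp add: numeral_2_eq_2)
      qed
      then show ?thesis using eq2[of t] by simp
    qed
    then show ?thesis by blast
  qed
  have "norm (\<Sum>t<Mn. e (\<phi> t)) \<le> 2 / lo"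
    using lo loh hi_half dn mono by (intro kusmin_landau_pos) auto
  then show ?thesis using sumeq by simp
qed

context vdc begin

lemma claimA:
  assumes N1: "Nr \<ge> 1" and hN: "hn \<le> Nr powr eta"
    and big: "2 * Cj (q + 1) / aj (q + 1) \<le> Nr powr (1 - eta)"
    and mom0: "\<forall>i<k0. Mom LL h i = 0" and momk: "Mom LL h k0 \<noteq> 0"
    and hb: "\<forall>l<LL. \<bar>real_of_int (h l)\<bar> \<le> hn"
    and sig: "\<sigma> * alpha h (q + 1) = \<bar>alpha h (q + 1)\<bar>" "\<bar>\<sigma>\<bar> = 1"
    and y: "Nr \<le> y" "y \<le> 2 * Nr"
  shows "aj (q + 1) * 2 powr (fc - 1) * Nr powr (fc - 1) / 2 \<le> \<sigma> * Fh c m LL h (q + 1) y \<and>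
         \<sigma> * Fh c m LL h (q + 1) y \<le> 3 / 2 * (aj (q + 1) * (real LL * real LL ^ k0 * hn)) * Nr powr (fc - 1)"
proof -
  let ?a = "alpha h (q + 1)" and ?F = "Fh c m LL h (q + 1) y" and ?b = "fc - 1"
  have lead: "\<bar>?F - ?a * y powr ?b\<bar> \<le> \<bar>?a\<bar> * y powr ?b / 2"
    using leading[OF y(1) N1 hN big mom0 momk _ hb] beta_q1 by simp
  have "\<sigma> * ?F = \<bar>?a\<bar> * y powr ?b + \<sigma> * (?F - ?a * y powr ?b)"
    using sig by (simp add: algebra_simps)
  moreover have "\<bar>\<sigma> * (?F - ?a * y powr ?b)\<bar> \<le> \<bar>?a\<bar> * y powr ?b / 2"
    using lead sig by (simp add: abs_mult)
  ultimately have s1: "\<bar>?a\<bar> * y powr ?b / 2 \<le> \<sigma> * ?F" and s2: "\<sigma> * ?F \<le> 3 / 2 * (\<bar>?a\<bar> * y powr ?b)"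
    unfolding abs_le_iff by linarith+
  have yp: "y > 0" using y N1 by simp
  have b0: "?b \<le> 0" using fc_lt1 by simp
  have ylo: "2 powr ?b * Nr powr ?b \<le> y powr ?b"
  proof -
    have "(2 * Nr) powr ?b \<le> y powr ?b" using y yp b0 by (intro powr_mono2') auto
    then show ?thesis using N1 by (simp add: powr_mult)
  qed
  have yhi: "y powr ?b \<le> Nr powr ?b" using y N1 b0 by (intro powr_mono2') auto
  have "aj (q + 1) * 2 powr ?b * Nr powr ?b / 2 \<le> \<bar>?a\<bar> * y powr ?b / 2"
  proof -
    have "aj (q + 1) * (2 powr ?b * Nr powr ?b) \<le> \<bar>?a\<bar> * y powr ?b"
      using alpha_lower[OF momk, of "q+1"] ylo aj_pos[of "q+1"] by (intro mult_mono) auto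
    then show ?thesis by (simp add: mult_ac)
  qed
  moreover have "3 / 2 * (\<bar>?a\<bar> * y powr ?b) \<le> 3 / 2 * (aj (q + 1) * (real LL * real LL ^ k0 * hn)) * Nr powr ?b"
  proof -
    have "\<bar>?a\<bar> * y powr ?b \<le> (aj (q + 1) * (real LL * real LL ^ k0 * hn)) * Nr powr ?b"
      using alpha_upper[OF hb, of "q+1"] yhi by (intro mult_mono) auto
    then show ?thesis by (simp add: mult_ac)
  qed
  ultimately show ?thesis using s1 s2 by linarith
qed

lemma claimB:
  assumes N1: "Nr \<ge> 1" and hN: "hn \<le> Nr powr eta"
    and big: "2 * Cj (q + 2) / aj (q + 2) \<le> Nr powr (1 - eta)"
    and mom0: "\<forall>i<k0. Mom LL h i = 0" and momk: "Mom LL h k0 \<noteq> 0"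
    and hb: "\<forall>l<LL. \<bar>real_of_int (h l)\<bar> \<le> hn"
    and sig: "\<bar>\<sigma>\<bar> = 1"
  shows "\<exists>B2. (\<forall>y. Nr \<le> y \<longrightarrow> y \<le> 2 * Nr \<longrightarrow> 0 \<le> \<sigma> * Fh c m LL h (q + 2) y \<and> \<sigma> * Fh c m LL h (q + 2) y \<le> B2) \<or>
            (\<forall>y. Nr \<le> y \<longrightarrow> y \<le> 2 * Nr \<longrightarrow> - B2 \<le> \<sigma> * Fh c m LL h (q + 2) y \<and> \<sigma> * Fh c m LL h (q + 2) y \<le> 0)"
proof -
  let ?a = "alpha h (q + 2)" and ?b = "fc - 2"
  define B2 where "B2 = 3 / 2 * (\<bar>?a\<bar> * Nr powr ?b)"
  have key: "\<bar>\<sigma> * Fh c m LL h (q + 2) y - \<sigma> * ?a * y powr ?b\<bar> \<le> \<bar>?a\<bar> * y powr ?b / 2 \<and> y powr ?b \<le> Nr powr ?b"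
    if y: "Nr \<le> y" "y \<le> 2 * Nr" for y
  proof -
    have "\<bar>Fh c m LL h (q + 2) y - ?a * y powr ?b\<bar> \<le> \<bar>?a\<bar> * y powr ?b / 2"
      using leading[OF y(1) N1 hN big mom0 momk _ hb] beta_q2 by simp
    moreover have "y powr ?b \<le> Nr powr ?b" using y N1 fc_lt1 by (intro powr_mono2') auto
    moreover have "\<sigma> * Fh c m LL h (q + 2) y - \<sigma> * ?a * y powr ?b = \<sigma> * (Fh c m LL h (q + 2) y - ?a * y powr ?b)"
      by (simp add: algebra_simps)
    ultimately show ?thesis using sig by (simp only: abs_mult) simp
  qed
  have sa: "\<bar>\<sigma> * ?a\<bar> = \<bar>?a\<bar>" using sig by (simp add: abs_mult)
  show ?thesis
  proof (cases "\<sigma> * ?a \<ge> 0")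
    case True
    then have sa': "\<sigma> * ?a = \<bar>?a\<bar>" using sa by simp
    have "\<forall>y. Nr \<le> y \<longrightarrow> y \<le> 2 * Nr \<longrightarrow> 0 \<le> \<sigma> * Fh c m LL h (q + 2) y \<and> \<sigma> * Fh c m LL h (q + 2) y \<le> B2"
    proof (intro allI impI)
      fix y assume y: "Nr \<le> y" "y \<le> 2 * Nr"
      have k: "\<bar>\<sigma> * Fh c m LL h (q + 2) y - \<bar>?a\<bar> * y powr ?b\<bar> \<le> \<bar>?a\<bar> * y powr ?b / 2" "y powr ?b \<le> Nr powr ?b"
        using key[OF y] unfolding sa' by simp_all
      have "\<bar>?a\<bar> * y powr ?b \<le> \<bar>?a\<bar> * Nr powr ?b" using k(2) by (intro mult_left_mono) auto
      moreover have "0 \<le> \<bar>?a\<bar> * y powr ?b" by simp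
      ultimately show "0 \<le> \<sigma> * Fh c m LL h (q + 2) y \<and> \<sigma> * Fh c m LL h (q + 2) y \<le> B2"
        using k(1) unfolding B2_def abs_le_iff by linarith
    qed
    then show ?thesis by blast
  next
    case False
    then have sa': "\<sigma> * ?a = - \<bar>?a\<bar>" using sa by linarith
    have "\<forall>y. Nr \<le> y \<longrightarrow> y \<le> 2 * Nr \<longrightarrow> - B2 \<le> \<sigma> * Fh c m LL h (q + 2) y \<and> \<sigma> * Fh c m LL h (q + 2) y \<le> 0"
    proof (intro allI impI)
      fix y assume y: "Nr \<le> y" "y \<le> 2 * Nr"
      have k: "\<bar>\<sigma> * Fh c m LL h (q + 2) y + \<bar>?a\<bar> * y powr ?b\<bar> \<le> \<bar>?a\<bar> * y powr ?b / 2" "y powr ?b \<le> Nr powr ?b"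
        using key[OF y] unfolding sa' by simp_all
      have "\<bar>?a\<bar> * y powr ?b \<le> \<bar>?a\<bar> * Nr powr ?b" using k(2) by (intro mult_left_mono) auto
      moreover have "0 \<le> \<bar>?a\<bar> * y powr ?b" by simp
      ultimately show "- B2 \<le> \<sigma> * Fh c m LL h (q + 2) y \<and> \<sigma> * Fh c m LL h (q + 2) y \<le> 0"
        using k(1) unfolding B2_def abs_le_iff by linarith
    qed
    then show ?thesis by blast
  qed
qed

end

lemma Xrec_lemma:
  fixes Nr \<theta> Gr K1 :: real
  assumes N1: "Nr \<ge> 1" and th: "0 \<le> \<theta>" "\<theta> \<le> 1"
    and G: "Nr powr \<theta> / 2 \<le> Gr" "Gr \<le> Nr powr \<theta>" "Gr \<ge> 1" and K1: "K1 \<ge> 1"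
  shows "(Nr + Gr - 1) / Gr * (Nr + 2 * (Gr - 1) * (K1 * Nr powr (1 - \<theta>))) \<le> (8 * K1 * Nr powr (1 - \<theta> / 2))^2"
proof -
  define Y where "Y = Nr powr \<theta>"
  have Y1: "Y \<ge> 1" unfolding Y_def using N1 th by (intro ge_one_powr_ge_zero) auto
  have YN: "Y \<le> Nr" unfolding Y_def using N1 th powr_mono[of \<theta> 1 Nr] by simp
  have A: "(Nr + Gr - 1) / Gr \<le> 4 * Nr / Y"
  proof -
    have "(Nr + Gr - 1) / Gr \<le> 2 * Nr / Gr" using G YN Y_def by (intro divide_right_mono) auto
    also have "\<dots> \<le> 2 * Nr / (Y / 2)" using G Y_def Y1 N1 by (intro divide_left_mono) auto
    also have "\<dots> = 4 * Nr / Y" by simp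
    finally show ?thesis .
  qed
  have YP: "Y * Nr powr (1 - \<theta>) = Nr" unfolding Y_def using N1 by (simp add: powr_add[symmetric])
  have B: "Nr + 2 * (Gr - 1) * (K1 * Nr powr (1 - \<theta>)) \<le> Nr * (1 + 2 * K1)"
  proof -
    have "2 * (Gr - 1) * (K1 * Nr powr (1 - \<theta>)) \<le> 2 * Y * (K1 * Nr powr (1 - \<theta>))"
      using G K1 Y_def by (intro mult_right_mono) auto
    also have "\<dots> = 2 * K1 * (Y * Nr powr (1 - \<theta>))" by (simp add: mult_ac)
    also have "\<dots> = 2 * K1 * Nr" using YP by simp
    finally show ?thesis by (simp add: algebra_simps)
  qed
  have C: "(Nr + Gr - 1) / Gr * (Nr + 2 * (Gr - 1) * (K1 * Nr powr (1 - \<theta>))) \<le> 4 * Nr / Y * (Nr * (1 + 2 * K1))"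
    using A B G K1 N1 Y1 by (intro mult_mono) auto
  have sq: "(Nr powr (1 - \<theta> / 2))^2 = Nr * Nr / Y"
  proof -
    have "(Nr powr (1 - \<theta> / 2))^2 = Nr powr (2 - \<theta>)"
      using N1 by (simp add: power2_eq_square powr_add[symmetric])
    also have "\<dots> = Nr powr 2 / Y" unfolding Y_def using N1 by (simp add: powr_diff)
    also have "\<dots> = Nr * Nr / Y" using N1 by (simp add: power2_eq_square powr_numeral)
    finally show ?thesis .
  qed
  have "4 * Nr / Y * (Nr * (1 + 2 * K1)) = (4 * (1 + 2 * K1)) * (Nr * Nr / Y)" by (simp add: field_simps)
  also have "\<dots> \<le> (64 * K1^2) * (Nr * Nr / Y)"
  proof (intro mult_right_mono)
    have "K1 \<le> K1 * K1" using mult_left_mono[of 1 K1 K1] K1 by simp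
    moreover have "\<forall>Q. K1 \<le> Q \<longrightarrow> 4 * (1 + 2 * K1) \<le> 64 * Q" using K1 by auto
    ultimately show "4 * (1 + 2 * K1) \<le> 64 * K1^2" unfolding power2_eq_square by blast
    show "0 \<le> Nr * Nr / Y" using N1 Y1 by simp
  qed
  also have "\<dots> = (8 * K1 * Nr powr (1 - \<theta> / 2))^2" using sq by (simp add: power_mult_distrib)
  finally show ?thesis using C by simp
qed

context vdc begin

lemma q_le_k: "q \<le> k" unfolding q_def by simp

lemma main_k0:
  "\<exists>C0>0. \<exists>N0::nat. \<forall>N h hn. N \<ge> N0 \<longrightarrow> (\<forall>i<k0. Mom LL h i = 0) \<longrightarrow> Mom LL h k0 \<noteq> 0 \<longrightarrow>
     (\<forall>l<LL. \<bar>real_of_int (h l)\<bar> \<le> hn) \<longrightarrow> hn \<le> real N powr eta \<longrightarrow>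
     norm (\<Sum>n\<in>{int N..<int N + int N}. e (Fh c m LL h 0 (of_int n))) \<le> C0 * real N powr (1 - eta)"
proof -
  define a1 where "a1 = aj (q + 1)"
  define Kq where "Kq = 8 / a1"
  define K where "K j = 8 ^ (q - j) * (Kq + 1)" for j :: nat
  define \<epsilon> where "\<epsilon> = 1 - fc - (2 ^ (q + 1) - 1) * eta"
  have a1pos: "a1 > 0" unfolding a1_def by (rule aj_pos)
  have Kq0: "Kq > 0" unfolding Kq_def using a1pos by simp
  have K1: "K j \<ge> 1" for j
  proof -
    have "(1::real) \<le> 8 ^ (q - j)" by (rule one_le_power) simp
    moreover have "1 \<le> Kq + 1" using Kq0 by simp
    ultimately have "1 * 1 \<le> 8 ^ (q - j) * (Kq + 1)" by (intro mult_mono) auto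
    then show ?thesis unfolding K_def by simp
  qed
  have \<epsilon>pos: "\<epsilon> > 0" unfolding \<epsilon>_def using eta_sum_lt[OF q_le_k] by simp
  have eta1: "1 - eta > 0" using eta_lt1 by simp
  obtain N1 where N1: "\<forall>N\<ge>N1. 2 * Cj (q + 1) / aj (q + 1) \<le> real N powr (1 - eta)"
    using exists_N_powr[OF eta1] by blast
  obtain N2 where N2: "\<forall>N\<ge>N2. 2 * Cj (q + 2) / aj (q + 2) \<le> real N powr (1 - eta)"
    using exists_N_powr[OF eta1] by blast
  obtain N3 where N3: "\<forall>N\<ge>N3. 3 * (a1 * (real LL * real LL ^ k0)) \<le> real N powr \<epsilon>"
    using exists_N_powr[OF \<epsilon>pos] by blast
  define N0 where "N0 = max 1 (max N1 (max N2 N3))"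
  show ?thesis
  proof (intro exI[of _ "K 0"] conjI exI[of _ N0] allI impI)
    show "K 0 > 0" using K1[of 0] by simp
    fix N h hn
    assume NN0: "N0 \<le> N" and mom0: "\<forall>i<k0. Mom LL h i = 0" and momk: "Mom LL h k0 \<noteq> 0"
      and hb: "\<forall>l<LL. \<bar>real_of_int (h l)\<bar> \<le> hn" and hN: "hn \<le> real N powr eta"
    define Nr where "Nr = real N"
    have Nr1: "Nr \<ge> 1" using NN0 unfolding N0_def Nr_def by simp
    have N1': "N \<ge> 1" using NN0 unfolding N0_def by simp
    have big1: "2 * Cj (q + 1) / aj (q + 1) \<le> Nr powr (1 - eta)" using N1 NN0 unfolding N0_def Nr_def by simp
    have big2: "2 * Cj (q + 2) / aj (q + 2) \<le> Nr powr (1 - eta)" using N2 NN0 unfolding N0_def Nr_def by simp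
    have big3: "3 * (a1 * (real LL * real LL ^ k0)) \<le> Nr powr \<epsilon>" using N3 NN0 unfolding N0_def Nr_def by simp
    have hN': "hn \<le> Nr powr eta" using hN unfolding Nr_def .
    have hn0: "hn \<ge> 0" using hb[rule_format, of 0] unfolding LL_def by simp
    define G where "G j = \<lfloor>Nr powr (2 ^ (j + 1) * eta)\<rfloor>" for j :: nat
    define X where "X j = K j * Nr powr (1 - 2 ^ j * eta)" for j :: nat
    define g where "g n = Fh c m LL h 0 (of_int n)" for n :: int
    obtain \<sigma> :: real where sig: "\<sigma> * alpha h (q + 1) = \<bar>alpha h (q + 1)\<bar>" "\<bar>\<sigma>\<bar> = 1"
    proof (cases "alpha h (q + 1) \<ge> 0")
      case True then show ?thesis using that[of 1] by simp
    next
      case False then show ?thesis using that[of "-1"] by simp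
    qed
    define lo1 where "lo1 = aj (q + 1) * 2 powr (fc - 1) * Nr powr (fc - 1) / 2"
    define hi1 where "hi1 = 3 / 2 * (aj (q + 1) * (real LL * real LL ^ k0 * hn)) * Nr powr (fc - 1)"
    define Pmax where "Pmax = Nr powr ((2 ^ (q + 1) - 2) * eta)"
    have lo1pos: "lo1 > 0" unfolding lo1_def using aj_pos Nr1 by simp
    have Gge1: "G j \<ge> 1" for j
    proof -
      have "Nr powr (2 ^ (j + 1) * eta) \<ge> 1" using Nr1 eta_pos by (intro ge_one_powr_ge_zero) auto
      then show ?thesis unfolding G_def using floor_half by blast
    qed
    have Gbounds: "Nr powr (2 ^ (j + 1) * eta) / 2 \<le> real_of_int (G j) \<and> real_of_int (G j) \<le> Nr powr (2 ^ (j + 1) * eta)" for j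
    proof -
      have "Nr powr (2 ^ (j + 1) * eta) \<ge> 1" using Nr1 eta_pos by (intro ge_one_powr_ge_zero) auto
      then show ?thesis unfolding G_def using floor_half by blast
    qed
    have prodb: "real (prod_list rs) \<le> Pmax \<and> 1 \<le> prod_list rs" if rs: "okl G rs" "length rs = q" for rs
    proof -
      have p: "1 \<le> prod_list rs \<and> real (prod_list rs) \<le> (\<Prod>j<length rs. real_of_int (G j))"
        using prod_okl[OF rs(1)] Gge1 by blast
      have "(\<Prod>j<q. real_of_int (G j)) \<le> (\<Prod>j<q. Nr powr (2 ^ (j + 1) * eta))"
        using Gbounds Gge1 by (intro prod_mono) (auto simp: order_trans[OF zero_le_one])
      also have "\<dots> = Nr powr (\<Sum>j<q. 2 ^ (j + 1) * eta)" using Nr1 by (simp add: powr_sum)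
      also have "(\<Sum>j<q. (2::real) ^ (j + 1) * eta) = (2 ^ (q + 1) - 2) * eta"
        using sum_pow2[of q] by (simp add: sum_distrib_right[symmetric])
      finally show ?thesis using p rs unfolding Pmax_def by simp
    qed
    have Phi: "Pmax * hi1 \<le> 1 / 2"
    proof -
      have "hi1 \<le> 3 / 2 * (a1 * (real LL * real LL ^ k0 * Nr powr eta)) * Nr powr (fc - 1)"
        unfolding hi1_def a1_def using hN' aj_pos[of "q+1"] by (intro mult_right_mono mult_left_mono) auto
      then have "Pmax * hi1 \<le> Pmax * (3 / 2 * (a1 * (real LL * real LL ^ k0 * Nr powr eta)) * Nr powr (fc - 1))"
        unfolding Pmax_def by (intro mult_left_mono) auto
      also have "\<dots> = 3 / 2 * (a1 * (real LL * real LL ^ k0)) * (Pmax * Nr powr eta * Nr powr (fc - 1))"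
        by (simp add: mult_ac)
      also have "Pmax * Nr powr eta * Nr powr (fc - 1) = Nr powr (- \<epsilon>)"
        unfolding Pmax_def \<epsilon>_def using Nr1 by (simp add: powr_add[symmetric] algebra_simps)
      also have "3 / 2 * (a1 * (real LL * real LL ^ k0)) * Nr powr (- \<epsilon>) \<le> 1 / 2"
      proof -
        let ?Z = "a1 * (real LL * real LL ^ k0)"
        have "3 * ?Z * Nr powr (- \<epsilon>) \<le> Nr powr \<epsilon> * Nr powr (- \<epsilon>)"
          using big3 by (intro mult_right_mono) auto
        moreover have "Nr powr \<epsilon> * Nr powr (- \<epsilon>) = 1" using Nr1 by (simp add: powr_add[symmetric])
        ultimately have "3 * ?Z * Nr powr (- \<epsilon>) \<le> 1" by simp
        then show ?thesis by (simp add: mult_ac)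
      qed
      finally show ?thesis .
    qed
    define Fs where "Fs j x = \<sigma> * Fh c m LL h j x" for j x
    have derFs: "(Fs j has_real_derivative Fs (Suc j) y) (at y)" if "y > 0" for j y
      unfolding Fs_def[abs_def] using Fh_deriv[OF that] by (intro DERIV_cmult)
    obtain B2 where B2: "(\<forall>y. Nr \<le> y \<longrightarrow> y \<le> 2 * Nr \<longrightarrow> 0 \<le> \<sigma> * Fh c m LL h (q + 2) y \<and> \<sigma> * Fh c m LL h (q + 2) y \<le> B2) \<or>
            (\<forall>y. Nr \<le> y \<longrightarrow> y \<le> 2 * Nr \<longrightarrow> - B2 \<le> \<sigma> * Fh c m LL h (q + 2) y \<and> \<sigma> * Fh c m LL h (q + 2) y \<le> 0)"
      using claimB[OF Nr1 hN' big2 mom0 momk hb sig(2)] by blast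
    have base: "norm (\<Sum>n\<in>{int N..<int N + int N - int (sum_list rs)}. e (Dop rs g n)) \<le> X q"
      if rs: "length rs = q" "okl G rs" for rs
    proof -
      have pb: "real (prod_list rs) \<le> Pmax" "1 \<le> prod_list rs" using prodb[OF rs(2) rs(1)] by auto
      have hi1nn: "hi1 \<ge> 0" unfolding hi1_def using aj_pos[of "q+1"] hn0 by simp
      have KL: "norm (\<Sum>n\<in>{int N..<int N + int N - int (sum_list rs)}. e (Dop rs (\<lambda>n. Fs 0 (of_int n)) n)) \<le> 2 / lo1"
      proof (rule base_KL[where Fs = Fs and q = q and hi = hi1 and Bb = B2])
        show "\<And>j y. y > 0 \<Longrightarrow> (Fs j has_real_derivative Fs (Suc j) y) (at y)" by (rule derFs)
        show "N \<ge> 1" by (rule N1')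
        show "length rs = q" by (rule rs(1))
        show "lo1 \<le> Fs (q + 1) y \<and> Fs (q + 1) y \<le> hi1" if "real N \<le> y" "y \<le> 2 * real N" for y
          using claimA[OF Nr1 hN' big1 mom0 momk hb sig] that unfolding Fs_def lo1_def hi1_def Nr_def by simp
        show "(\<forall>y. real N \<le> y \<longrightarrow> y \<le> 2 * real N \<longrightarrow> 0 \<le> Fs (q + 2) y \<and> Fs (q + 2) y \<le> B2) \<or>
            (\<forall>y. real N \<le> y \<longrightarrow> y \<le> 2 * real N \<longrightarrow> - B2 \<le> Fs (q + 2) y \<and> Fs (q + 2) y \<le> 0)"
          using B2 unfolding Fs_def Nr_def .
        show "1 \<le> prod_list rs" by (rule pb(2))
        show "real (prod_list rs) * hi1 \<le> 1 / 2"
          using pb(1) hi1nn Phi by (meson mult_right_mono order_trans)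
        show "0 < lo1" by (rule lo1pos)
      qed
      have "norm (\<Sum>n\<in>{int N..<int N + int N - int (sum_list rs)}. e (Dop rs (\<lambda>n. Fs 0 (of_int n)) n))
          = norm (\<Sum>n\<in>{int N..<int N + int N - int (sum_list rs)}. e (Dop rs g n))"
      proof -
        have eq: "Dop rs (\<lambda>n. Fs 0 (of_int n)) n = \<sigma> * Dop rs g n" for n
          unfolding Fs_def g_def by (rule Dop_cmult)
        show ?thesis
        proof (cases "\<sigma> = 1")
          case True then show ?thesis using eq by simp
        next
          case False
          then have "\<sigma> = -1" using sig(2) by (simp add: abs_if split: if_splits)
          then show ?thesis using eq norm_sum_e_neg[of "\<lambda>n. Dop rs g n"] by simp
        qed
      qed
      moreover have "2 / lo1 \<le> X q"
      proof -
        have h2: "2 powr (fc - 1) \<ge> 1 / 2"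
        proof -
          have "2 powr (-1) \<le> 2 powr (fc - 1)" using fc_pos by (intro powr_mono) auto
          then show ?thesis by (simp add: powr_minus)
        qed
        have "2 / lo1 = 4 / (aj (q + 1) * 2 powr (fc - 1)) * (1 / Nr powr (fc - 1))"
          unfolding lo1_def by (simp add: field_simps)
        also have "1 / Nr powr (fc - 1) = Nr powr (1 - fc)" using Nr1 by (simp add: powr_minus_divide[symmetric] powr_minus)
        also have "4 / (aj (q + 1) * 2 powr (fc - 1)) \<le> Kq"
        proof -
          have "aj (q + 1) * (1/2) \<le> aj (q + 1) * 2 powr (fc - 1)" using h2 aj_pos[of "q+1"] by (intro mult_left_mono) auto
          then have "4 / (aj (q + 1) * 2 powr (fc - 1)) \<le> 4 / (aj (q + 1) * (1/2))"
            using aj_pos[of "q+1"] by (intro divide_left_mono) auto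
          then show ?thesis unfolding Kq_def a1_def by simp
        qed
        then have "4 / (aj (q + 1) * 2 powr (fc - 1)) * Nr powr (1 - fc) \<le> Kq * Nr powr (1 - fc)"
          by (intro mult_right_mono) auto
        also have "\<dots> \<le> K q * Nr powr (1 - 2 ^ q * eta)"
        proof (intro mult_mono)
          show "Kq \<le> K q" unfolding K_def by simp
          show "Nr powr (1 - fc) \<le> Nr powr (1 - 2 ^ q * eta)"
            using eta_pow_le[OF q_le_k] Nr1 by (intro powr_mono) auto
        qed (use K1[of q] in auto)
        finally show ?thesis unfolding X_def .
      qed
      ultimately show ?thesis using KL by simp
    qed
    have Xrec: "(Nr + G j - 1) / G j * (Nr + 2 * (G j - 1) * X (Suc j)) \<le> (X j)^2" if j: "j < q" for j
    proof -
      define \<theta> where "\<theta> = 2 ^ (j + 1) * eta"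
      have th: "0 \<le> \<theta>" "\<theta> \<le> 1"
      proof -
        show "0 \<le> \<theta>" unfolding \<theta>_def using eta_pos by simp
        have "\<theta> \<le> fc" unfolding \<theta>_def using eta_pow_le[of "j+1"] j q_le_k by simp
        then show "\<theta> \<le> 1" using fc_lt1 by simp
      qed
      have KK: "K j = 8 * K (Suc j)" unfolding K_def using j
        by (simp add: power_Suc[symmetric] Suc_diff_Suc)
      have X1: "X (Suc j) = K (Suc j) * Nr powr (1 - \<theta>)" unfolding X_def \<theta>_def by simp
      have X0: "X j = 8 * K (Suc j) * Nr powr (1 - \<theta> / 2)" unfolding X_def \<theta>_def KK by simp
      show ?thesis
        unfolding X1 X0
        using Xrec_lemma[OF Nr1 th, of "real_of_int (G j)" "K (Suc j)"] Gbounds[of j] Gge1[of j] K1[of "Suc j"]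
        unfolding \<theta>_def by simp
    qed
    have Xnn: "0 \<le> X j" if "j \<le> q" for j unfolding X_def using K1[of j] by (simp add: order_trans[OF zero_le_one])
    have "norm (\<Sum>n\<in>{int N..<int N + int N}. e (g n)) \<le> X 0"
      by (rule weyl_iter[where q = q and G = G and N = Nr, OF _ base Gge1 Xnn Xrec]) (simp_all add: Nr_def)
    then show "norm (\<Sum>n\<in>{int N..<int N + int N}. e (Fh c m LL h 0 (of_int n))) \<le> K 0 * real N powr (1 - eta)"
      unfolding g_def X_def Nr_def by simp
  qed
qed

end

lemma sup_norm_props:
  assumes "\<exists>l<L. h l \<noteq> 0"
  shows "sup_norm L h \<ge> 1" "\<forall>l<L. \<bar>real_of_int (h l)\<bar> \<le> sup_norm L h"
proof -
  have L0: "L \<noteq> 0" using assms by auto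
  have sn: "sup_norm L h = real_of_int (Max ((\<lambda>l. \<bar>h l\<bar>) ` {..<L}))" using L0 by (simp add: sup_norm_def)
  obtain l0 where l0: "l0 < L" "h l0 \<noteq> 0" using assms by auto
  have le: "\<bar>h l\<bar> \<le> Max ((\<lambda>l. \<bar>h l\<bar>) ` {..<L})" if "l < L" for l
    using that by (intro Max_ge) auto
  show "\<forall>l<L. \<bar>real_of_int (h l)\<bar> \<le> sup_norm L h"
    using le unfolding sn by (metis of_int_abs of_int_le_iff)
  have "1 \<le> \<bar>h l0\<bar>" using l0 by linarith
  then show "sup_norm L h \<ge> 1" using le[OF l0(1)] unfolding sn by linarith
qed

theorem proposition2:
  fixes c :: real and m :: nat
  assumes "c > 1" and "c \<notin> \<int>" and "m > 0"
  defines "L \<equiv> nat \<lfloor>c\<rfloor> + 1"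
  shows "\<exists>C>0. \<exists>\<delta>>0. \<forall>N::nat. \<forall>h::nat \<Rightarrow> int.
           N > 0 \<longrightarrow> (\<exists>l<L. h l \<noteq> 0) \<longrightarrow>
           sup_norm L h \<le> \<delta> * real N powr (1 - frac c) \<longrightarrow>
           norm (\<Sum>n\<in>{N..<2*N}. e ((1 / real m) * (\<Sum>l<L. real_of_int (h l) * real (n + l) powr c)))
             \<le> C * sup_norm L h * real N powr (1 - dist_int c / 2 powr (c + 1))"
proof -
  define k where "k = nat \<lfloor>c\<rfloor>"
  define eta where "eta = dist_int c / 2 powr (c + 1)"
  have vdck: "vdc c m k0" if "k0 \<le> k" for k0
    using assms that unfolding vdc_def k_def by auto
  have LLeq: "vdc.LL c = L" if "k0 \<le> k" for k0
    using vdc.LL_def[OF vdck[OF that]] vdc.k_def[OF vdck[OF that]] unfolding L_def by simp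
  have etaeq: "vdc.eta c = eta" if "k0 \<le> k" for k0
    using vdc.eta_def[OF vdck[OF that]] unfolding eta_def by simp
  define P where "P k0 C0 N0 \<longleftrightarrow> (\<forall>(N::nat) h hn. N \<ge> N0 \<longrightarrow> (\<forall>i<k0. Mom L h i = 0) \<longrightarrow> Mom L h k0 \<noteq> 0 \<longrightarrow>
     (\<forall>l<L. \<bar>real_of_int (h l)\<bar> \<le> hn) \<longrightarrow> hn \<le> real N powr eta \<longrightarrow>
     norm (\<Sum>n\<in>{int N..<int N + int N}. e (Fh c m L h 0 (of_int n))) \<le> C0 * real N powr (1 - eta))" for k0 C0 N0
  have ex: "\<forall>k0. \<exists>p::real \<times> nat. k0 \<le> k \<longrightarrow> fst p > 0 \<and> P k0 (fst p) (snd p)"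
  proof
    fix k0
    show "\<exists>p::real \<times> nat. k0 \<le> k \<longrightarrow> fst p > 0 \<and> P k0 (fst p) (snd p)"
    proof (cases "k0 \<le> k")
      case True
      obtain C0 N0 where "C0 > 0" "P k0 C0 N0"
        using vdc.main_k0[OF vdck[OF True]] unfolding LLeq[OF True] etaeq[OF True] P_def by blast
      then show ?thesis by (intro exI[of _ "(C0, N0)"]) simp
    qed simp
  qed
  obtain f where f: "\<forall>k0. k0 \<le> k \<longrightarrow> fst (f k0) > 0 \<and> P k0 (fst (f k0)) (snd (f k0))"
    using choice[OF ex] by blast
  define Cmax where "Cmax = Max ((\<lambda>k0. fst (f k0)) ` {..k})"
  define Nmax where "Nmax = Max ((\<lambda>k0. snd (f k0)) ` {..k})"
  have Cle: "fst (f k0) \<le> Cmax" if "k0 \<le> k" for k0 unfolding Cmax_def using that by (intro Max_ge) auto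
  have Nle: "snd (f k0) \<le> Nmax" if "k0 \<le> k" for k0 unfolding Nmax_def using that by (intro Max_ge) auto
  have Cmax0: "Cmax > 0" using Cle[of 0] f by fastforce
  define C where "C = Cmax + real Nmax + 1"
  have eta_pos: "eta > 0" and eta_lt1: "eta < 1"
    using vdc.eta_pos[OF vdck[of 0]] vdc.eta_lt1[OF vdck[of 0]] etaeq[of 0] by auto
  have Cpos: "C > 0" unfolding C_def using Cmax0 by simp
  show ?thesis
  proof (intro exI[of _ C] conjI allI impI Cpos)
    fix N :: nat and h :: "nat \<Rightarrow> int"
    assume N0: "N > 0" and hnz: "\<exists>l<L. h l \<noteq> 0" and "sup_norm L h \<le> C * real N powr (1 - frac c)"
    define hn where "hn = sup_norm L h"
    have hn1: "hn \<ge> 1" and hb: "\<forall>l<L. \<bar>real_of_int (h l)\<bar> \<le> hn"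
      using sup_norm_props[OF hnz] unfolding hn_def by auto
    define S where "S = (\<Sum>n\<in>{N..<2*N}. e ((1 / real m) * (\<Sum>l<L. real_of_int (h l) * real (n + l) powr c)))"
    have Nr1: "real N \<ge> 1" using N0 by simp
    have Spow: "real N powr (1 - eta) \<ge> 1" using Nr1 eta_lt1 by (intro ge_one_powr_ge_zero) auto
    have triv: "norm S \<le> real N"
    proof -
      have "norm S \<le> (\<Sum>n\<in>{N..<2*N}. norm (e ((1 / real m) * (\<Sum>l<L. real_of_int (h l) * real (n + l) powr c))))"
        unfolding S_def by (rule norm_sum)
      also have "\<dots> = real N" by simp
      finally show ?thesis .
    qed
    have C1: "C \<ge> 1" unfolding C_def using Cmax0 by simp
    have goal_from: "norm S \<le> C * hn * real N powr (1 - eta)" if "norm S \<le> B" "B \<le> hn * real N powr (1 - eta)" for B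
    proof -
      have "hn * real N powr (1 - eta) \<le> C * (hn * real N powr (1 - eta))"
        using mult_right_mono[of 1 C "hn * real N powr (1 - eta)"] C1 hn1 Spow by simp
      then show ?thesis using that by (simp add: mult.assoc)
    qed
    have "norm S \<le> C * hn * real N powr (1 - eta)"
    proof (cases "N < Nmax")
      case True
      have "norm S \<le> real Nmax" using triv True by simp
      also have "\<dots> \<le> C * 1 * 1" unfolding C_def using Cmax0 by simp
      also have "\<dots> \<le> C * hn * real N powr (1 - eta)"
        using hn1 Spow C1 by (intro mult_mono) auto
      finally show ?thesis .
    next
      case NN: False
      show ?thesis
      proof (cases "hn \<le> real N powr eta")
        case False
        have "real N = real N powr eta * real N powr (1 - eta)" using Nr1 by (simp add: powr_add[symmetric])
        also have "\<dots> \<le> hn * real N powr (1 - eta)" using False by (intro mult_right_mono) auto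
        finally show ?thesis using goal_from[OF triv] by simp
      next
        case True
        have "\<exists>i<L. Mom L h i \<noteq> 0" by (rule moments_nonzero[OF hnz])
        then obtain i0 where i0: "i0 < L" "Mom L h i0 \<noteq> 0" by blast
        define k0 where "k0 = (LEAST i. Mom L h i \<noteq> 0)"
        have momk: "Mom L h k0 \<noteq> 0" unfolding k0_def by (rule LeastI[of _ i0]) (rule i0(2))
        have k0le: "k0 \<le> i0" unfolding k0_def by (rule Least_le) (rule i0(2))
        have k0k: "k0 \<le> k" using k0le i0 unfolding L_def k_def by simp
        have mom0: "\<forall>i<k0. Mom L h i = 0" unfolding k0_def using not_less_Least by blast
        have Pk: "P k0 (fst (f k0)) (snd (f k0))" using f k0k by blast
        have "snd (f k0) \<le> N" using Nle[OF k0k] NN by simp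
        then have bound: "norm (\<Sum>n\<in>{int N..<int N + int N}. e (Fh c m L h 0 (of_int n))) \<le> fst (f k0) * real N powr (1 - eta)"
        proof -
          have "\<forall>(N'::nat) h' hn'. N' \<ge> snd (f k0) \<longrightarrow> (\<forall>i<k0. Mom L h' i = 0) \<longrightarrow> Mom L h' k0 \<noteq> 0 \<longrightarrow>
             (\<forall>l<L. \<bar>real_of_int (h' l)\<bar> \<le> hn') \<longrightarrow> hn' \<le> real N' powr eta \<longrightarrow>
             norm (\<Sum>n\<in>{int N'..<int N' + int N'}. e (Fh c m L h' 0 (of_int n))) \<le> fst (f k0) * real N' powr (1 - eta)"
            using Pk unfolding P_def .
          then have "N \<ge> snd (f k0) \<longrightarrow> (\<forall>i<k0. Mom L h i = 0) \<longrightarrow> Mom L h k0 \<noteq> 0 \<longrightarrow>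
             (\<forall>l<L. \<bar>real_of_int (h l)\<bar> \<le> hn) \<longrightarrow> hn \<le> real N powr eta \<longrightarrow>
             norm (\<Sum>n\<in>{int N..<int N + int N}. e (Fh c m L h 0 (of_int n))) \<le> fst (f k0) * real N powr (1 - eta)"
            by (elim allE)
          then show ?thesis using \<open>snd (f k0) \<le> N\<close> mom0 momk hb True by (elim impE) auto
        qed
        have Seq: "S = (\<Sum>n\<in>{int N..<int N + int N}. e (Fh c m L h 0 (of_int n)))"
        proof -
          have "{int N..<int N + int N} = int ` {N..<2*N}" by (simp add: image_int_atLeastLessThan)
          then have "(\<Sum>n\<in>{int N..<int N + int N}. e (Fh c m L h 0 (of_int n))) = (\<Sum>n\<in>{N..<2*N}. e (Fh c m L h 0 (real n)))"
            by (simp add: sum.reindex)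
          also have "\<dots> = S" unfolding S_def Fh_def by simp
          finally show ?thesis by simp
        qed
        have "fst (f k0) * real N powr (1 - eta) \<le> hn * real N powr (1 - eta) * C"
        proof -
          have "fst (f k0) \<le> C" using Cle[OF k0k] unfolding C_def by simp
          also have "C \<le> hn * C" using hn1 C1 by simp
          finally have "fst (f k0) \<le> hn * C" .
          then have "fst (f k0) * real N powr (1 - eta) \<le> (hn * C) * real N powr (1 - eta)"
            using Spow by (intro mult_right_mono) auto
          then show ?thesis by (simp only: mult_ac)
        qed
        then show ?thesis using bound Seq by (simp add: mult_ac)
      qed
    qed
    then show "norm (\<Sum>n\<in>{N..<2*N}. e ((1 / real m) * (\<Sum>l<L. real_of_int (h l) * real (n + l) powr c)))
             \<le> C * sup_norm L h * real N powr (1 - dist_int c / 2 powr (c + 1))"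
      unfolding S_def hn_def eta_def .
  qed
qed

end
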